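(* Let $V$ be a nonlocal vertex algebra and let $\mathcal S(x)$ be a unitary rational quantum Yang–Baxter operator on $V$. Then: (a) $\mathcal S(x)(\mathbf 1\otimes v)=\mathbf 1\otimes v$ for all $v\in V$ if and only if $\mathcal S(x)(v\otimes\mathbf 1)=v\otimes\mathbf 1$ for all $v\in V$; (b) $[\mathcal D\otimes1,\mathcal S(x)]=-\frac{d}{dx}\mathcal S(x)$ if and only if $[1\otimes\mathcal D,\mathcal S^{-1}(x)]=\frac{d}{dx}\mathcal S^{-1}(x)$; (c) $\mathcal S(x_1)(Y(x_2)\otimes1)=(Y(x_2)\otimes1)\mathcal S^{23}(x_1)\mathcal S^{13}(x_1+x_2)$ if and only if $\mathcal S(x_1)(1\otimes Y(x_2))=(1\otimes Y(x_2))\mathcal S^{12}(x_1-x_2)\mathcal S^{13}(x_1)$.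
   Context: All vector spaces are over $\mathbb{C}$. A nonlocal vertex algebra is a vector space $V$ with a linear map $Y(\cdot,x):V\to \mathrm{Hom}(V,V((x)))$, $v\mapsto Y(v,x)=\sum_{n\in\mathbb Z}v_nx^{-n-1}$, and a vector $\mathbf 1\in V$ such that for all $v$: $Y(\mathbf 1,x)v=v$, $Y(v,x)\mathbf 1\in V[[x]]$, $\lim_{x\to0}Y(v,x)\mathbf 1=v$; and for all $u,v,w$ there is $k\ge0$ with $(x_0+x_2)^kY(u,x_0+x_2)Y(v,x_2)w=(x_0+x_2)^kY(Y(u,x_0)v,x_2)w$. Write $Y(x):V\otimes V\to V((x))$, $Y(x)(u\otimes v)=Y(u,x)v$, and $\mathcal Dv=v_{-2}\mathbf 1$. Conventions: $f(x_1\pm x_2)$ for $f\in\mathbb C((x))$ is expanded in nonnegative powers of the second variable; for a linear map $T$ on a tensor product, $T^{ij}$ denotes $T$ acting on the $i$-th and $j$-th tensor factors (identity elsewhere); maps are extended linearly over scalar formal series. A rational quantum Yang–Baxter operator on $V$ is a linear map $\mathcal S(x):V\otimes V\to V\otimes V\otimes\mathbb C((x))$ with $\mathcal S^{12}(x)\mathcal S^{13}(x+z)\mathcal S^{23}(z)=\mathcal S^{23}(z)\mathcal S^{13}(x+z)\mathcal S^{12}(x)$; it is unitary if $\mathcal S(x)\mathcal S^{21}(-x)=1$, where $\mathcal S^{21}(x)=\sigma\mathcal S(x)\sigma$ with $\sigma$ the flip on $V\otimes V$. Then $\mathcal S^{-1}(x)=\mathcal S^{21}(-x)$ denotes the inverse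 of the $\mathbb C((x))$-linear extension of $\mathcal S(x)$. *)

theory Defs
  imports "HOL-Library.Poly_Mapping" "HOL-Computational_Algebra.Formal_Laurent_Series"
begin

(* Vector spaces are modelled in coordinates with respect to a basis indexed by a type 'b:
  V = 'b \<Rightarrow>\<^sub>0 complex,  V\<otimes>V = ('b \<times> 'b) \<Rightarrow>\<^sub>0 complex,  V\<otimes>V\<otimes>V = ('b \<times> 'b \<times> 'b) \<Rightarrow>\<^sub>0 complex.
  Tensoring with a ring R of scalar series is done by taking coefficients in R, e.g.
  V\<otimes>V\<otimes>C((x)) = ('b \<times> 'b) \<Rightarrow>\<^sub>0 complex fls, and C((x))((z)) = complex fls fls
  (outer variable z, inner variable x). *)

definition smul :: "'r::comm_ring_1 \<Rightarrow> ('i \<Rightarrow>\<^sub>0 'r) \<Rightarrow> ('i \<Rightarrow>\<^sub>0 'r)" where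
  "smul c t = Poly_Mapping.map (\<lambda>z. c * z) t"

definition lin_ext :: "('i \<Rightarrow> ('j \<Rightarrow>\<^sub>0 'r::comm_ring_1)) \<Rightarrow> ('i \<Rightarrow>\<^sub>0 'r) \<Rightarrow> ('j \<Rightarrow>\<^sub>0 'r)" where
  "lin_ext f t = (\<Sum>i\<in>Poly_Mapping.keys t. smul (Poly_Mapping.lookup t i) (f i))"

definition bvec :: "'b \<Rightarrow> ('b \<Rightarrow>\<^sub>0 complex)" where
  "bvec a = Poly_Mapping.single a 1"

definition tens2 :: "('a \<Rightarrow>\<^sub>0 complex) \<Rightarrow> ('c \<Rightarrow>\<^sub>0 complex) \<Rightarrow> ('a \<times> 'c \<Rightarrow>\<^sub>0 complex)" where
  "tens2 u v = Poly_Mapping.Abs_poly_mapping (\<lambda>(a, b). Poly_Mapping.lookup u a * Poly_Mapping.lookup v b)"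

(* Vertex operators: Y u v k is the coefficient of x^k in Y(u,x)v, i.e. Y u v k = u_{-k-1} v. *)
type_synonym 'b vop = "('b \<Rightarrow>\<^sub>0 complex) \<Rightarrow> ('b \<Rightarrow>\<^sub>0 complex) \<Rightarrow> int \<Rightarrow> ('b \<Rightarrow>\<^sub>0 complex)"

(* Coefficient of x0^a x2^b in Y(u,x0+x2)Y(v,x2)w, (x0+x2)^n expanded in nonnegative powers of x2. *)
definition va_assoc_lhs :: "'b vop \<Rightarrow> ('b \<Rightarrow>\<^sub>0 complex) \<Rightarrow> ('b \<Rightarrow>\<^sub>0 complex) \<Rightarrow> ('b \<Rightarrow>\<^sub>0 complex)
    \<Rightarrow> int \<Rightarrow> int \<Rightarrow> ('b \<Rightarrow>\<^sub>0 complex)" where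
  "va_assoc_lhs Y u v w a b =
     (\<Sum>j\<in>{j::nat. Y v w (b - int j) \<noteq> 0}.
        smul ((of_int (a + int j) :: complex) gchoose j) (Y u (Y v w (b - int j)) (a + int j)))"

(* Coefficient of x0^a x2^b in Y(Y(u,x0)v,x2)w. *)
definition va_assoc_rhs :: "'b vop \<Rightarrow> ('b \<Rightarrow>\<^sub>0 complex) \<Rightarrow> ('b \<Rightarrow>\<^sub>0 complex) \<Rightarrow> ('b \<Rightarrow>\<^sub>0 complex)
    \<Rightarrow> int \<Rightarrow> int \<Rightarrow> ('b \<Rightarrow>\<^sub>0 complex)" where
  "va_assoc_rhs Y u v w a b = Y (Y u v a) w b"

(* Multiplication of a two-variable series (coefficients F a b of x0^a x2^b) by (x0+x2)^n. *)
definition mult_binom :: "nat \<Rightarrow> (int \<Rightarrow> int \<Rightarrow> ('b \<Rightarrow>\<^sub>0 complex)) \<Rightarrow> int \<Rightarrow> int \<Rightarrow> ('b \<Rightarrow>\<^sub>0 complex)" where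
  "mult_binom n F a b = (\<Sum>i\<le>n. smul (of_nat (n choose i)) (F (a - int (n - i)) (b - int i)))"

definition nonlocal_va :: "'b vop \<Rightarrow> ('b \<Rightarrow>\<^sub>0 complex) \<Rightarrow> bool" where
  "nonlocal_va Y vac \<longleftrightarrow>
     (\<forall>u u' v k. Y (u + u') v k = Y u v k + Y u' v k) \<and>
     (\<forall>c u v k. Y (smul c u) v k = smul c (Y u v k)) \<and>
     (\<forall>u v v' k. Y u (v + v') k = Y u v k + Y u v' k) \<and>
     (\<forall>c u v k. Y u (smul c v) k = smul c (Y u v k)) \<and>
     (\<forall>u v. \<exists>N. \<forall>k<N. Y u v k = 0) \<and>
     (\<forall>v k. Y vac v k = (if k = 0 then v else 0)) \<and>
     (\<forall>v k. k < 0 \<longrightarrow> Y v vac k = 0) \<and>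
     (\<forall>v. Y v vac 0 = v) \<and>
     (\<forall>u v w. \<exists>n::nat. \<forall>a b.
        mult_binom n (va_assoc_lhs Y u v w) a b = mult_binom n (va_assoc_rhs Y u v w) a b)"

(* D v = v_{-2} 1 = coefficient of x^1 in Y(v,x)1. *)
definition vD :: "'b vop \<Rightarrow> ('b \<Rightarrow>\<^sub>0 complex) \<Rightarrow> ('b \<Rightarrow>\<^sub>0 complex) \<Rightarrow> ('b \<Rightarrow>\<^sub>0 complex)" where
  "vD Y vac v = Y v vac 1"

type_synonym 'b smap = "('b \<times> 'b \<Rightarrow>\<^sub>0 complex) \<Rightarrow> ('b \<times> 'b \<Rightarrow>\<^sub>0 complex fls)"

definition emb2 :: "('b \<times> 'b \<Rightarrow>\<^sub>0 complex) \<Rightarrow> ('b \<times> 'b \<Rightarrow>\<^sub>0 complex fls)" where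
  "emb2 t = Poly_Mapping.map fls_const t"

definition smap_linear :: "'b smap \<Rightarrow> bool" where
  "smap_linear S \<longleftrightarrow> (\<forall>s t. S (s + t) = S s + S t) \<and> (\<forall>c t. S (smul c t) = smul (fls_const c) (S t))"

definition Sext :: "'b smap \<Rightarrow> ('b \<times> 'b \<Rightarrow>\<^sub>0 complex fls) \<Rightarrow> ('b \<times> 'b \<Rightarrow>\<^sub>0 complex fls)" where
  "Sext S t = lin_ext (\<lambda>p. S (Poly_Mapping.single p 1)) t"

definition negvar :: "complex fls \<Rightarrow> complex fls" where
  "negvar f = Abs_fls (\<lambda>n. if even n then fls_nth f n else - (fls_nth f n))"

definition flip2 :: "('b \<times> 'b \<Rightarrow>\<^sub>0 'r::zero) \<Rightarrow> ('b \<times> 'b \<Rightarrow>\<^sub>0 'r)" where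
  "flip2 t = Poly_Mapping.Abs_poly_mapping (\<lambda>(a, b). Poly_Mapping.lookup t (b, a))"

(* S^{-1}(x) = S^{21}(-x) = \<sigma> S(-x) \<sigma>. *)
definition Sinv :: "'b smap \<Rightarrow> 'b smap" where
  "Sinv S t = flip2 (Poly_Mapping.map negvar (S (flip2 t)))"

definition unitary :: "'b smap \<Rightarrow> bool" where
  "unitary S \<longleftrightarrow> (\<forall>t. Sext S (Sinv S t) = emb2 t)"

(* f(x), as a constant in z. *)
definition Ein :: "complex fls \<Rightarrow> complex fls fls" where
  "Ein f = fls_const f"

(* f(z). *)
definition Eout :: "complex fls \<Rightarrow> complex fls fls" where
  "Eout f = Abs_fls (\<lambda>n. fls_const (fls_nth f n))"

(* f(x+z), expanded in nonnegative powers of z. *)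
definition Eplus :: "complex fls \<Rightarrow> complex fls fls" where
  "Eplus f = Abs_fls (\<lambda>k. if k < 0 then 0 else
      Abs_fls (\<lambda>m. ((of_int (m + k) :: complex) gchoose (nat k)) * fls_nth f (m + k)))"

(* f(x-z), expanded in nonnegative powers of z. *)
definition Eminus :: "complex fls \<Rightarrow> complex fls fls" where
  "Eminus f = Abs_fls (\<lambda>k. if k < 0 then 0 else
      Abs_fls (\<lambda>m. (if even k then 1 else -1) *
         ((of_int (m + k) :: complex) gchoose (nat k)) * fls_nth f (m + k)))"

type_synonym 'b t3 = "('b \<times> 'b \<times> 'b \<Rightarrow>\<^sub>0 complex fls fls)"

definition emb3 :: "('b \<times> 'b \<times> 'b \<Rightarrow>\<^sub>0 complex) \<Rightarrow> 'b t3" where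
  "emb3 t = Poly_Mapping.map (\<lambda>z. fls_const (fls_const z)) t"

(* S^{12}, S^{13}, S^{23} with argument given by the embedding \<phi> (e.g. Eplus for argument x+z),
  extended linearly over C((x))((z)). *)
definition S12 :: "'b smap \<Rightarrow> (complex fls \<Rightarrow> complex fls fls) \<Rightarrow> 'b t3 \<Rightarrow> 'b t3" where
  "S12 S \<phi> = lin_ext (\<lambda>(a, b, c). Poly_Mapping.Abs_poly_mapping (\<lambda>(p, q, c').
      if c' = c then \<phi> (Poly_Mapping.lookup (S (Poly_Mapping.single (a, b) 1)) (p, q)) else 0))"

definition S13 :: "'b smap \<Rightarrow> (complex fls \<Rightarrow> complex fls fls) \<Rightarrow> 'b t3 \<Rightarrow> 'b t3" where
  "S13 S \<phi> = lin_ext (\<lambda>(a, b, c). Poly_Mapping.Abs_poly_mapping (\<lambda>(p, b', q).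
      if b' = b then \<phi> (Poly_Mapping.lookup (S (Poly_Mapping.single (a, c) 1)) (p, q)) else 0))"

definition S23 :: "'b smap \<Rightarrow> (complex fls \<Rightarrow> complex fls fls) \<Rightarrow> 'b t3 \<Rightarrow> 'b t3" where
  "S23 S \<phi> = lin_ext (\<lambda>(a, b, c). Poly_Mapping.Abs_poly_mapping (\<lambda>(a', r, s).
      if a' = a then \<phi> (Poly_Mapping.lookup (S (Poly_Mapping.single (b, c) 1)) (r, s)) else 0))"

(* Rational quantum Yang-Baxter equation S^{12}(x)S^{13}(x+z)S^{23}(z) = S^{23}(z)S^{13}(x+z)S^{12}(x). *)
definition qybe :: "'b smap \<Rightarrow> bool" where
  "qybe S \<longleftrightarrow> (\<forall>t. S12 S Ein (S13 S Eplus (S23 S Eout (emb3 t)))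
                  = S23 S Eout (S13 S Eplus (S12 S Ein (emb3 t))))"

(* F\<otimes>1 and 1\<otimes>F, extended linearly over the scalars 'r (embedding \<iota> of complex numbers). *)
definition tensL :: "(complex \<Rightarrow> 'r::comm_ring_1) \<Rightarrow> (('b \<Rightarrow>\<^sub>0 complex) \<Rightarrow> ('b \<Rightarrow>\<^sub>0 complex))
    \<Rightarrow> ('b \<times> 'b \<Rightarrow>\<^sub>0 'r) \<Rightarrow> ('b \<times> 'b \<Rightarrow>\<^sub>0 'r)" where
  "tensL \<iota> F = lin_ext (\<lambda>(a, b). Poly_Mapping.map \<iota> (tens2 (F (bvec a)) (bvec b)))"

definition tensR :: "(complex \<Rightarrow> 'r::comm_ring_1) \<Rightarrow> (('b \<Rightarrow>\<^sub>0 complex) \<Rightarrow> ('b \<Rightarrow>\<^sub>0 complex))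
    \<Rightarrow> ('b \<times> 'b \<Rightarrow>\<^sub>0 'r) \<Rightarrow> ('b \<times> 'b \<Rightarrow>\<^sub>0 'r)" where
  "tensR \<iota> F = lin_ext (\<lambda>(a, b). Poly_Mapping.map \<iota> (tens2 (bvec a) (F (bvec b))))"

definition ddx :: "('b \<times> 'b \<Rightarrow>\<^sub>0 complex fls) \<Rightarrow> ('b \<times> 'b \<Rightarrow>\<^sub>0 complex fls)" where
  "ddx t = Poly_Mapping.map fls_deriv t"

(* Coefficient of x2^n in (Y(x2)\<otimes>1)t, resp. (1\<otimes>Y(x2))t, for t in V\<otimes>V\<otimes>V. *)
definition YL :: "'b vop \<Rightarrow> ('b \<times> 'b \<times> 'b \<Rightarrow>\<^sub>0 complex) \<Rightarrow> int \<Rightarrow> ('b \<times> 'b \<Rightarrow>\<^sub>0 complex)" where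
  "YL Y t n = (\<Sum>(a, b, c)\<in>Poly_Mapping.keys t. smul (Poly_Mapping.lookup t (a, b, c)) (tens2 (Y (bvec a) (bvec b) n) (bvec c)))"

definition YR :: "'b vop \<Rightarrow> ('b \<times> 'b \<times> 'b \<Rightarrow>\<^sub>0 complex) \<Rightarrow> int \<Rightarrow> ('b \<times> 'b \<Rightarrow>\<^sub>0 complex)" where
  "YR Y t n = (\<Sum>(a, b, c)\<in>Poly_Mapping.keys t. smul (Poly_Mapping.lookup t (a, b, c)) (tens2 (bvec a) (Y (bvec b) (bvec c) n)))"

(* Coefficient of x1^m x2^n in S(x1)(Y(x2)\<otimes>1)t, resp. S(x1)(1\<otimes>Y(x2))t. *)
definition S_YL :: "'b smap \<Rightarrow> 'b vop \<Rightarrow> ('b \<times> 'b \<times> 'b \<Rightarrow>\<^sub>0 complex) \<Rightarrow> int \<Rightarrow> int \<Rightarrow> ('b \<times> 'b \<Rightarrow>\<^sub>0 complex)" where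
  "S_YL S Y t m n = Poly_Mapping.map (\<lambda>f. fls_nth f m) (S (YL Y t n))"

definition S_YR :: "'b smap \<Rightarrow> 'b vop \<Rightarrow> ('b \<times> 'b \<times> 'b \<Rightarrow>\<^sub>0 complex) \<Rightarrow> int \<Rightarrow> int \<Rightarrow> ('b \<times> 'b \<Rightarrow>\<^sub>0 complex)" where
  "S_YR S Y t m n = Poly_Mapping.map (\<lambda>f. fls_nth f m) (S (YR Y t n))"

(* Coefficient of x1^m x2^n in (Y(x2)\<otimes>1)H, resp. (1\<otimes>Y(x2))H, for H in V\<otimes>V\<otimes>V\<otimes>C((x1))((x2)),
  extended linearly over the scalar series (x1 inner, x2 outer variable). *)
definition YL_app :: "'b vop \<Rightarrow> 'b t3 \<Rightarrow> int \<Rightarrow> int \<Rightarrow> ('b \<times> 'b \<Rightarrow>\<^sub>0 complex)" where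
  "YL_app Y H m n = (\<Sum>(p, r, s)\<in>Poly_Mapping.keys H.
      \<Sum>k\<in>{k. fls_nth (Poly_Mapping.lookup H (p, r, s)) k \<noteq> 0 \<and> Y (bvec p) (bvec r) (n - k) \<noteq> 0}.
        smul (fls_nth (fls_nth (Poly_Mapping.lookup H (p, r, s)) k) m) (tens2 (Y (bvec p) (bvec r) (n - k)) (bvec s)))"

definition YR_app :: "'b vop \<Rightarrow> 'b t3 \<Rightarrow> int \<Rightarrow> int \<Rightarrow> ('b \<times> 'b \<Rightarrow>\<^sub>0 complex)" where
  "YR_app Y H m n = (\<Sum>(p, r, s)\<in>Poly_Mapping.keys H.
      \<Sum>k\<in>{k. fls_nth (Poly_Mapping.lookup H (p, r, s)) k \<noteq> 0 \<and> Y (bvec r) (bvec s) (n - k) \<noteq> 0}.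
        smul (fls_nth (fls_nth (Poly_Mapping.lookup H (p, r, s)) k) m) (tens2 (bvec p) (Y (bvec r) (bvec s) (n - k))))"

end

theory Submission
  imports Defs
begin


lemma lookup_map0: "f 0 = 0 \<Longrightarrow> Poly_Mapping.lookup (Poly_Mapping.map f p) k = f (Poly_Mapping.lookup p k)"
  by transfer (auto simp: when_def)

lemma keys_map0_sub: "Poly_Mapping.keys (Poly_Mapping.map f p) \<subseteq> Poly_Mapping.keys p"
  by transfer (auto simp: when_def)

lemma lookup_smul [simp]: "Poly_Mapping.lookup (smul c t) i = c * Poly_Mapping.lookup t i"
  unfolding smul_def by (simp add: lookup_map0)

lemma smul_add: "smul c (a + b) = smul c a + smul c b"
  by (rule poly_mapping_eqI) (simp add: lookup_add algebra_simps)
lemma add_smul: "smul (c + d) a = smul c a + smul d a"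
  by (rule poly_mapping_eqI) (simp add: lookup_add algebra_simps)
lemma smul_smul: "smul c (smul d a) = smul (c * d) a"
  by (rule poly_mapping_eqI) (simp add: algebra_simps)
lemma smul_one [simp]: "smul 1 a = a"
  by (rule poly_mapping_eqI) simp
lemma smul_zero [simp]: "smul c 0 = 0"
  by (rule poly_mapping_eqI) simp
lemma zero_smul [simp]: "smul 0 a = 0"
  by (rule poly_mapping_eqI) simp
lemma smul_minus: "smul c (- a) = - smul c a"
  by (rule poly_mapping_eqI) simp
lemma smul_diff: "smul c (a - b) = smul c a - smul c b"
  by (rule poly_mapping_eqI) (simp add: lookup_minus algebra_simps)
lemma smul_sum: "smul c (sum f A) = (\<Sum>x\<in>A. smul c (f x))"
  by (rule poly_mapping_eqI) (simp add: lookup_sum sum_distrib_left)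
lemma sum_smul: "smul (sum f A) a = (\<Sum>x\<in>A. smul (f x) a)"
  by (rule poly_mapping_eqI) (simp add: lookup_sum sum_distrib_right)
lemma smul_single: "smul c (Poly_Mapping.single i d) = Poly_Mapping.single i (c * d)"
  by (rule poly_mapping_eqI) (simp add: lookup_single when_def)
lemma keys_smul_sub: "Poly_Mapping.keys (smul c t) \<subseteq> Poly_Mapping.keys t"
  unfolding smul_def by (rule keys_map0_sub)

lemma lin_ext_superset:
  assumes "finite A" "Poly_Mapping.keys t \<subseteq> A"
  shows "lin_ext f t = (\<Sum>i\<in>A. smul (Poly_Mapping.lookup t i) (f i))"
  unfolding lin_ext_def
  by (rule sum.mono_neutral_left) (use assms in \<open>auto simp: in_keys_iff\<close>)

lemma lookup_lin_ext: "Poly_Mapping.lookup (lin_ext f t) j = (\<Sum>i\<in>Poly_Mapping.keys t. Poly_Mapping.lookup t i * Poly_Mapping.lookup (f i) j)"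
  unfolding lin_ext_def by (simp add: lookup_sum)

lemma lin_ext_add: "lin_ext f (a + b) = lin_ext f a + lin_ext f b"
proof -
  let ?A = "Poly_Mapping.keys a \<union> Poly_Mapping.keys b"
  have k: "Poly_Mapping.keys (a + b) \<subseteq> ?A" by (rule keys_add)
  show ?thesis
    by (simp add: lin_ext_superset[OF _ k] lin_ext_superset[of ?A a] lin_ext_superset[of ?A b]
        lookup_add add_smul sum.distrib)
qed

lemma lin_ext_zero [simp]: "lin_ext f 0 = 0"
  by (simp add: lin_ext_def)

lemma lin_ext_smul: "lin_ext f (smul c a) = smul c (lin_ext f a)"
proof -
  have "lin_ext f (smul c a) = (\<Sum>i\<in>Poly_Mapping.keys a. smul (Poly_Mapping.lookup (smul c a) i) (f i))"
    by (rule lin_ext_superset[OF _ keys_smul_sub]) simp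
  then show ?thesis by (simp add: lin_ext_def smul_sum smul_smul)
qed

lemma lin_ext_single: "lin_ext f (Poly_Mapping.single i c) = smul c (f i)"
  by (cases "c = 0") (simp_all add: lin_ext_def)

lemma lin_ext_sum: "lin_ext f (sum g A) = (\<Sum>x\<in>A. lin_ext f (g x))"
  by (induction A rule: infinite_finite_induct) (simp_all add: lin_ext_add)

lemma lin_ext_minus: "lin_ext f (- a) = - lin_ext f a"
proof -
  have "lin_ext f (- a) + lin_ext f a = 0" using lin_ext_add[of f "-a" a] by simp
  then show ?thesis by (simp add: eq_neg_iff_add_eq_0)
qed

lemma lin_ext_diff: "lin_ext f (a - b) = lin_ext f a - lin_ext f b"
  using lin_ext_add[of f a "-b"] by (simp add: lin_ext_minus)

lemma pm_expand: "t = (\<Sum>i\<in>Poly_Mapping.keys t. Poly_Mapping.single i (Poly_Mapping.lookup t i))"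
  by (rule poly_mapping_eqI) (simp add: lookup_sum lookup_single when_def in_keys_iff)

lemma pm_expand': "t = (\<Sum>i\<in>Poly_Mapping.keys t. smul (Poly_Mapping.lookup t i) (Poly_Mapping.single i 1))"
  by (subst pm_expand) (simp add: smul_single)

lemma lin_ext_id: "lin_ext (\<lambda>i. Poly_Mapping.single i 1) t = t"
  by (simp add: lin_ext_def pm_expand'[symmetric])

lemma lin_ext_unique:
  assumes add: "\<And>a b. F (a + b) = F a + F b" and hom: "\<And>c a. F (smul c a) = smul c (F a)"
  shows "F t = lin_ext (\<lambda>i. F (Poly_Mapping.single i 1)) t"
proof -
  have z: "F 0 = 0" using add[of 0 0] by simp
  have s: "F (sum g A) = (\<Sum>x\<in>A. F (g x))" for g and A :: "'z set"
    by (induction A rule: infinite_finite_induct) (simp_all add: add z)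
  have "F t = F (\<Sum>i\<in>Poly_Mapping.keys t. smul (Poly_Mapping.lookup t i) (Poly_Mapping.single i 1))"
    by (subst pm_expand') simp
  also have "\<dots> = lin_ext (\<lambda>i. F (Poly_Mapping.single i 1)) t"
    by (simp add: s hom lin_ext_def)
  finally show ?thesis .
qed

lemma lin_ext_compose: "lin_ext f (lin_ext g t) = lin_ext (\<lambda>i. lin_ext f (g i)) t"
proof -
  have "lin_ext f (lin_ext g t) = (\<Sum>i\<in>Poly_Mapping.keys t. smul (Poly_Mapping.lookup t i) (lin_ext f (g i)))"
    by (simp only: lin_ext_def[of g t] lin_ext_sum lin_ext_smul)
  then show ?thesis by (simp only: lin_ext_def[of _ t])
qed

lemma lin_ext_cong: "(\<And>i. i \<in> Poly_Mapping.keys t \<Longrightarrow> f i = g i) \<Longrightarrow> lin_ext f t = lin_ext g t"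
  unfolding lin_ext_def by (rule sum.cong) auto


notation fls_nth (infixl \<open>$$\<close> 75)

lemma map_map0: "f 0 = 0 \<Longrightarrow> g 0 = 0 \<Longrightarrow> Poly_Mapping.map f (Poly_Mapping.map g x) = Poly_Mapping.map (f \<circ> g) x"
  by (rule poly_mapping_eqI) (simp add: lookup_map0)

lemma map_add0: "f 0 = 0 \<Longrightarrow> (\<And>a b. f (a + b) = f a + f b) \<Longrightarrow> Poly_Mapping.map f (x + y) = Poly_Mapping.map f x + Poly_Mapping.map f y"
  by (rule poly_mapping_eqI) (simp add: lookup_map0 lookup_add)

lemma lookup_tens2 [simp]: "Poly_Mapping.lookup (tens2 u v) (a, b) = Poly_Mapping.lookup u a * Poly_Mapping.lookup v b"
proof -
  have "finite {x. (case x of (a, b) \<Rightarrow> Poly_Mapping.lookup u a * Poly_Mapping.lookup v b) \<noteq> 0}"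
    by (rule finite_subset[of _ "Poly_Mapping.keys u \<times> Poly_Mapping.keys v"]) (auto simp: in_keys_iff)
  then show ?thesis by (simp add: tens2_def)
qed

lemma lookup_flip2 [simp]: "Poly_Mapping.lookup (flip2 t) (a, b) = Poly_Mapping.lookup t (b, a)"
proof -
  have "{x. (case x of (a, b) \<Rightarrow> Poly_Mapping.lookup t (b, a)) \<noteq> 0} = prod.swap ` Poly_Mapping.keys t"
    by (force simp: in_keys_iff image_iff)
  then have "finite {x. (case x of (a, b) \<Rightarrow> Poly_Mapping.lookup t (b, a)) \<noteq> 0}" by simp
  then show ?thesis by (simp add: flip2_def)
qed

lemma lookup_flip2': "Poly_Mapping.lookup (flip2 t) p = Poly_Mapping.lookup t (prod.swap p)"
  by (cases p) simp

lemma keys_flip2: "Poly_Mapping.keys (flip2 t) = prod.swap ` Poly_Mapping.keys t"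
  by (force simp: in_keys_iff image_iff lookup_flip2')

lemma flip2_flip2 [simp]: "flip2 (flip2 t) = t"
  by (rule poly_mapping_eqI) (simp add: lookup_flip2')

lemma flip2_add: "flip2 (a + b) = flip2 a + flip2 b"
  by (rule poly_mapping_eqI) (simp add: lookup_flip2' lookup_add)

lemma flip2_smul: "flip2 (smul c a) = smul c (flip2 a)"
  by (rule poly_mapping_eqI) (simp add: lookup_flip2')

lemma flip2_single: "flip2 (Poly_Mapping.single p c) = Poly_Mapping.single (prod.swap p) c"
  by (rule poly_mapping_eqI) (cases p, auto simp add: lookup_flip2' lookup_single when_def)

lemma flip2_tens2: "flip2 (tens2 u v) = tens2 v u"
  by (rule poly_mapping_eqI) (auto simp add: lookup_flip2')

lemma flip2_map: "f 0 = 0 \<Longrightarrow> flip2 (Poly_Mapping.map f t) = Poly_Mapping.map f (flip2 t)"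
  by (rule poly_mapping_eqI) (auto simp add: lookup_flip2' lookup_map0)

lemma flip_lin: "flip2 (lin_ext g w) = lin_ext (\<lambda>p. flip2 (g (prod.swap p))) (flip2 w)"
proof (rule poly_mapping_eqI)
  fix q
  have "Poly_Mapping.lookup (lin_ext (\<lambda>p. flip2 (g (prod.swap p))) (flip2 w)) q =
        (\<Sum>i\<in>prod.swap ` Poly_Mapping.keys w. Poly_Mapping.lookup w (prod.swap i) * Poly_Mapping.lookup (g (prod.swap i)) (prod.swap q))"
    by (simp add: lookup_lin_ext keys_flip2 lookup_flip2')
  also have "\<dots> = (\<Sum>i\<in>Poly_Mapping.keys w. Poly_Mapping.lookup w i * Poly_Mapping.lookup (g i) (prod.swap q))"
    by (subst sum.reindex) (auto intro: inj_onI)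
  finally show "Poly_Mapping.lookup (flip2 (lin_ext g w)) q = Poly_Mapping.lookup (lin_ext (\<lambda>p. flip2 (g (prod.swap p))) (flip2 w)) q"
    by (simp add: lookup_lin_ext lookup_flip2')
qed

lemma negvar_nth: "negvar f $$ n = (if even n then f $$ n else - (f $$ n))"
  unfolding negvar_def by (rule nth_Abs_fls_lower_bound[of "fls_subdegree f"]) simp

lemma negvar_negvar [simp]: "negvar (negvar f) = f"
  by (rule fls_eqI) (simp add: negvar_nth)

lemma negvar_0 [simp]: "negvar 0 = 0"
  by (rule fls_eqI) (simp add: negvar_nth)

lemma negvar_eq0_iff [simp]: "negvar f = 0 \<longleftrightarrow> f = 0"
  by (metis negvar_0 negvar_negvar)

lemma negvar_add: "negvar (f + g) = negvar f + negvar g"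
  by (rule fls_eqI) (simp add: negvar_nth)

lemma negvar_uminus: "negvar (- f) = - negvar f"
  by (rule fls_eqI) (simp add: negvar_nth)

lemma negvar_diff: "negvar (f - g) = negvar f - negvar g"
  by (rule fls_eqI) (simp add: negvar_nth)

lemma negvar_sum: "negvar (sum f A) = (\<Sum>x\<in>A. negvar (f x))"
  by (induction A rule: infinite_finite_induct) (simp_all add: negvar_add)

lemma negvar_const [simp]: "negvar (fls_const c) = fls_const c"
  by (rule fls_eqI) (simp add: negvar_nth)

lemma negvar_1 [simp]: "negvar 1 = 1"
  using negvar_const[of 1] by simp

lemma negvar_nth': "negvar f $$ n = (-1) ^ nat \<bar>n\<bar> * f $$ n"
  by (simp add: negvar_nth even_nat_iff)

lemma subdegree_negvar [simp]: "fls_subdegree (negvar f) = fls_subdegree f"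
proof (cases "f = 0")
  case False
  show ?thesis
    by (rule fls_subdegree_eqI) (use False in \<open>simp_all add: negvar_nth\<close>)
qed simp

lemma sign_mult: "(if even (i::int) then 1 else -1) * (if even (n - i) then 1 else -1) = (if even n then 1 else (-1::complex))"
  by auto

lemma negvar_mult: "negvar (f * g) = negvar f * negvar (g :: complex fls)"
proof (rule fls_eqI)
  fix n
  have "(negvar f * negvar g) $$ n = (\<Sum>i=fls_subdegree f..n - fls_subdegree g. negvar f $$ i * negvar g $$ (n - i))"
    using fls_times_nth(2)[of "negvar f" "negvar g" n] by simp
  also have "\<dots> = (\<Sum>i=fls_subdegree f..n - fls_subdegree g. (if even n then 1 else -1) * (f $$ i * g $$ (n - i)))"
  proof (rule sum.cong)
    fix i
    show "negvar f $$ i * negvar g $$ (n - i) = (if even n then 1 else -1) * (f $$ i * g $$ (n - i))"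
      unfolding negvar_nth by (cases "even i"; cases "even (n - i)"; cases "even n") auto
  qed simp
  also have "\<dots> = (if even n then 1 else -1) * (f * g) $$ n"
    by (simp add: fls_times_nth(2) sum_distrib_left)
  finally show "negvar (f * g) $$ n = (negvar f * negvar g) $$ n"
    by (simp add: negvar_nth)
qed

lemma deriv_negvar: "fls_deriv (negvar f) = - negvar (fls_deriv f)"
  by (rule fls_eqI) (simp add: negvar_nth)

definition tau :: "('b \<times> 'b \<Rightarrow>\<^sub>0 complex fls) \<Rightarrow> ('b \<times> 'b \<Rightarrow>\<^sub>0 complex fls)" where
  "tau w = flip2 (Poly_Mapping.map negvar w)"

lemma lookup_tau: "Poly_Mapping.lookup (tau w) p = negvar (Poly_Mapping.lookup w (prod.swap p))"
  by (simp add: tau_def lookup_flip2' lookup_map0)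

lemma tau_tau [simp]: "tau (tau w) = w"
  by (rule poly_mapping_eqI) (simp add: lookup_tau)

lemma tau_add: "tau (a + b) = tau a + tau b"
  by (rule poly_mapping_eqI) (simp add: lookup_tau lookup_add negvar_add)

lemma tau_minus: "tau (- a) = - tau a"
  by (rule poly_mapping_eqI) (simp add: lookup_tau negvar_uminus)

lemma tau_diff: "tau (a - b) = tau a - tau b"
  by (rule poly_mapping_eqI) (simp add: lookup_tau lookup_minus negvar_diff)

lemma keys_map_negvar: "Poly_Mapping.keys (Poly_Mapping.map negvar w) = Poly_Mapping.keys w"
  by (auto simp: in_keys_iff lookup_map0)

lemma keys_tau: "Poly_Mapping.keys (tau w) = prod.swap ` Poly_Mapping.keys w"
  by (simp add: tau_def keys_flip2 keys_map_negvar)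

lemma mapneg_lin: "Poly_Mapping.map negvar (lin_ext g w) = lin_ext (\<lambda>p. Poly_Mapping.map negvar (g p)) (Poly_Mapping.map negvar w)"
  by (rule poly_mapping_eqI) (simp add: lookup_lin_ext lookup_map0 keys_map_negvar negvar_sum negvar_mult)

lemma tau_lin: "tau (lin_ext g w) = lin_ext (\<lambda>p. tau (g (prod.swap p))) (tau w)"
  unfolding tau_def by (simp add: mapneg_lin flip_lin)

lemma tau_emb2: "tau (emb2 x) = emb2 (flip2 x)"
  by (rule poly_mapping_eqI) (simp add: lookup_tau emb2_def lookup_map0 lookup_flip2')

lemma ddx_tau: "ddx (tau w) = - tau (ddx w)"
  by (rule poly_mapping_eqI) (simp add: lookup_tau ddx_def lookup_map0 deriv_negvar)

lemma tau_ddx: "tau (ddx w) = - ddx (tau w)"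
  by (simp add: ddx_tau)


lemma lookup_emb2: "Poly_Mapping.lookup (emb2 t) p = fls_const (Poly_Mapping.lookup t p)"
  by (simp add: emb2_def lookup_map0)

lemma keys_emb2: "Poly_Mapping.keys (emb2 t) = Poly_Mapping.keys t"
  by (auto simp: in_keys_iff lookup_emb2)

lemma emb2_single: "emb2 (Poly_Mapping.single p c) = Poly_Mapping.single p (fls_const c)"
  by (simp add: emb2_def)

lemma Sext_emb2:
  assumes "smap_linear S"
  shows "Sext S (emb2 u) = S u"
proof -
  have add: "S (a + b) = S a + S b" and hom: "S (smul c a) = smul (fls_const c) (S a)" for a b c
    using assms by (auto simp: smap_linear_def)
  have z: "S 0 = 0" using add[of 0 0] by simp
  have s: "S (sum g A) = (\<Sum>x\<in>A. S (g x))" for g and A :: "('b \<times> 'b) set"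
    by (induction A rule: infinite_finite_induct) (simp_all add: add z)
  have "S u = S (\<Sum>i\<in>Poly_Mapping.keys u. smul (Poly_Mapping.lookup u i) (Poly_Mapping.single i 1))"
    by (subst pm_expand') simp
  also have "\<dots> = Sext S (emb2 u)"
    by (simp add: s hom Sext_def lin_ext_def keys_emb2 lookup_emb2)
  finally show ?thesis by simp
qed

lemma map_id0 [simp]: "Poly_Mapping.map (\<lambda>x. x) t = t"
  by (rule poly_mapping_eqI) (simp add: lookup_map0)

lemma Sinv_Sinv [simp]: "Sinv (Sinv S) = S"
  by (rule ext) (simp add: Sinv_def map_map0 comp_def flip2_map)

lemma Sinv_tau: "Sinv S t = tau (S (flip2 t))"
  by (simp add: Sinv_def tau_def)

lemma Sext_Sinv: "Sext (Sinv S) u = tau (Sext S (tau u))"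
proof -
  have "tau (Sext S (tau u)) = lin_ext (\<lambda>p. tau (S (Poly_Mapping.single (prod.swap p) 1))) (tau (tau u))"
    by (simp add: Sext_def tau_lin)
  also have "\<dots> = Sext (Sinv S) u"
    by (simp add: Sext_def Sinv_tau flip2_single)
  finally show ?thesis by simp
qed

lemma unitary_left:
  assumes "unitary S"
  shows "Sext S (Sext (Sinv S) u) = u"
proof -
  have "Sext S (Sext (Sinv S) u) = lin_ext (\<lambda>p. Sext S (Sinv S (Poly_Mapping.single p 1))) u"
    by (simp add: Sext_def lin_ext_compose)
  also have "\<dots> = lin_ext (\<lambda>p. Poly_Mapping.single p 1) u"
    using assms by (simp add: unitary_def emb2_single)
  finally show ?thesis by (simp add: lin_ext_id)
qed

lemma unitary_right:
  assumes "unitary S"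
  shows "Sext (Sinv S) (Sext S u) = u"
proof -
  have "Sext S u = tau (Sext (Sinv S) (tau u))"
    using Sext_Sinv[of "Sinv S" u] by simp
  then have h: "tau (Sext S u) = Sext (Sinv S) (tau u)" by simp
  have "Sext (Sinv S) (Sext S u) = tau (Sext S (tau (Sext S u)))" by (rule Sext_Sinv)
  also have "\<dots> = tau (tau u)" by (simp only: h unitary_left[OF assms])
  finally show ?thesis by simp
qed

lemma Sext_add: "Sext S (a + b) = Sext S a + Sext S b"
  by (simp add: Sext_def lin_ext_add)

lemma Sext_smul: "Sext S (smul c a) = smul c (Sext S a)"
  by (simp add: Sext_def lin_ext_smul)

lemma Sext_inj:
  assumes "unitary S" "Sext S a = Sext S b"
  shows "a = b"
  by (metis unitary_right[OF assms(1)] assms(2))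

subsection \<open>Part (a)\<close>

lemma part_a_dir:
  assumes lin: "smap_linear S" and un: "unitary S"
    and H: "\<And>v. S (tens2 v1 v) = emb2 (tens2 v1 v)"
  shows "S (tens2 v v1) = emb2 (tens2 v v1)"
proof -
  have "Sinv S (tens2 v v1) = emb2 (tens2 v v1)"
    by (simp add: Sinv_tau flip2_tens2 H tau_emb2)
  then have "Sext S (emb2 (tens2 v v1)) = emb2 (tens2 v v1)"
    using un by (metis unitary_def)
  then show ?thesis by (simp add: Sext_emb2[OF lin])
qed

lemma part_a_dir2:
  assumes lin: "smap_linear S" and un: "unitary S"
    and H: "\<And>v. S (tens2 v v1) = emb2 (tens2 v v1)"
  shows "S (tens2 v1 v) = emb2 (tens2 v1 v)"
proof -
  have "Sinv S (tens2 v1 v) = emb2 (tens2 v1 v)"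
    by (simp add: Sinv_tau flip2_tens2 H tau_emb2)
  then have "Sext S (emb2 (tens2 v1 v)) = emb2 (tens2 v1 v)"
    using un by (metis unitary_def)
  then show ?thesis by (simp add: Sext_emb2[OF lin])
qed

lemma lin_Sinv:
  assumes "smap_linear S" shows "smap_linear (Sinv S)"
proof -
  have add: "S (a + b) = S a + S b" and hom: "S (smul c a) = smul (fls_const c) (S a)" for a b c
    using assms by (auto simp: smap_linear_def)
  have ta: "tau (smul (fls_const c) w) = smul (fls_const c) (tau w)" for c w
    by (rule poly_mapping_eqI) (simp add: lookup_tau negvar_mult)
  show ?thesis unfolding smap_linear_def Sinv_tau
    by (simp add: flip2_add flip2_smul add hom tau_add ta)
qed

lemma part_a:
  assumes lin: "smap_linear S" and un: "unitary S"
  shows "(\<forall>v. S (tens2 vac v) = emb2 (tens2 vac v)) \<longleftrightarrow> (\<forall>v. S (tens2 v vac) = emb2 (tens2 v vac))"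
  using part_a_dir[OF lin un] part_a_dir2[OF lin un] by blast

subsection \<open>Part (b)\<close>

lemma tau_mapconst: "tau (Poly_Mapping.map fls_const x) = Poly_Mapping.map fls_const (flip2 x)"
  by (rule poly_mapping_eqI) (simp add: lookup_tau lookup_map0 lookup_flip2')

lemma K1: "tensR fls_const D (tau w) = tau (tensL fls_const D w)"
proof -
  have "tau (tensL fls_const D w) = lin_ext (\<lambda>p. tau ((\<lambda>(a, b). Poly_Mapping.map fls_const (tens2 (D (bvec a)) (bvec b))) (prod.swap p))) (tau w)"
    unfolding tensL_def by (rule tau_lin)
  also have "(\<lambda>p. tau ((\<lambda>(a, b). Poly_Mapping.map fls_const (tens2 (D (bvec a)) (bvec b))) (prod.swap p)))
      = (\<lambda>(a, b). Poly_Mapping.map fls_const (tens2 (bvec a) (D (bvec b))))"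
    by (auto simp: tau_mapconst flip2_tens2)
  finally show ?thesis by (simp add: tensR_def)
qed

lemma K1': "tensL fls_const D (tau w) = tau (tensR fls_const D w)"
proof -
  have "tau (tensR fls_const D w) = lin_ext (\<lambda>p. tau ((\<lambda>(a, b). Poly_Mapping.map fls_const (tens2 (bvec a) (D (bvec b)))) (prod.swap p))) (tau w)"
    unfolding tensR_def by (rule tau_lin)
  also have "(\<lambda>p. tau ((\<lambda>(a, b). Poly_Mapping.map fls_const (tens2 (bvec a) (D (bvec b)))) (prod.swap p)))
      = (\<lambda>(a, b). Poly_Mapping.map fls_const (tens2 (D (bvec a)) (bvec b)))"
    by (auto simp: tau_mapconst flip2_tens2)
  finally show ?thesis by (simp add: tensL_def)
qed

lemma K2: "flip2 (tensR (\<lambda>c. c) D t) = tensL (\<lambda>c. c) D (flip2 t)"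
proof -
  have "flip2 (tensR (\<lambda>c. c) D t) = lin_ext (\<lambda>p. flip2 ((\<lambda>(a, b). Poly_Mapping.map (\<lambda>c. c) (tens2 (bvec a) (D (bvec b)))) (prod.swap p))) (flip2 t)"
    unfolding tensR_def by (rule flip_lin)
  also have "(\<lambda>p. flip2 ((\<lambda>(a, b). Poly_Mapping.map (\<lambda>c. c) (tens2 (bvec a) (D (bvec b)))) (prod.swap p)))
      = (\<lambda>(a, b). Poly_Mapping.map (\<lambda>c. c) (tens2 (D (bvec a)) (bvec b)))"
    by (auto simp: flip2_tens2)
  finally show ?thesis by (simp add: tensL_def)
qed

lemma K2': "flip2 (tensL (\<lambda>c. c) D t) = tensR (\<lambda>c. c) D (flip2 t)"
  by (metis K2 flip2_flip2)

lemma part_b: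
  "(\<forall>t. tensL fls_const D (S t) - S (tensL (\<lambda>c. c) D t) = - ddx (S t))
   \<longleftrightarrow> (\<forall>t. tensR fls_const D (Sinv S t) - Sinv S (tensR (\<lambda>c. c) D t) = ddx (Sinv S t))"
proof
  assume L: "\<forall>t. tensL fls_const D (S t) - S (tensL (\<lambda>c. c) D t) = - ddx (S t)"
  show "\<forall>t. tensR fls_const D (Sinv S t) - Sinv S (tensR (\<lambda>c. c) D t) = ddx (Sinv S t)"
  proof
    fix t
    have "tensR fls_const D (Sinv S t) - Sinv S (tensR (\<lambda>c. c) D t)
        = tau (tensL fls_const D (S (flip2 t)) - S (tensL (\<lambda>c. c) D (flip2 t)))"
      by (simp add: Sinv_tau K1 K2 tau_diff)
    also have "\<dots> = tau (- ddx (S (flip2 t)))" using L by simp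
    also have "\<dots> = ddx (Sinv S t)" by (simp add: tau_minus tau_ddx Sinv_tau)
    finally show "tensR fls_const D (Sinv S t) - Sinv S (tensR (\<lambda>c. c) D t) = ddx (Sinv S t)" .
  qed
next
  assume R: "\<forall>t. tensR fls_const D (Sinv S t) - Sinv S (tensR (\<lambda>c. c) D t) = ddx (Sinv S t)"
  have St: "S t = tau (Sinv S (flip2 t))" for t by (simp add: Sinv_tau)
  show "\<forall>t. tensL fls_const D (S t) - S (tensL (\<lambda>c. c) D t) = - ddx (S t)"
  proof
    fix t
    have "tensL fls_const D (S t) - S (tensL (\<lambda>c. c) D t)
        = tau (tensR fls_const D (Sinv S (flip2 t)) - Sinv S (tensR (\<lambda>c. c) D (flip2 t)))"
      by (simp add: St[of t] St[of "tensL (\<lambda>c. c) D t"] K1' K2' tau_diff)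
    also have "\<dots> = tau (ddx (Sinv S (flip2 t)))" using R by simp
    also have "\<dots> = - ddx (S t)" by (simp add: tau_ddx St[of t])
    finally show "tensL fls_const D (S t) - S (tensL (\<lambda>c. c) D t) = - ddx (S t)" .
  qed
qed


lemma sum_eq_nonzero:
  assumes "finite A" "finite B" "\<And>x. F x \<noteq> 0 \<Longrightarrow> x \<in> A \<and> x \<in> B"
  shows "sum F A = sum F B"
proof -
  have "sum F A = sum F (A \<union> B)" by (rule sum.mono_neutral_left) (use assms in auto)
  also have "\<dots> = sum F B" by (rule sum.mono_neutral_right) (use assms in auto)
  finally show ?thesis .
qed

lemma fls_times_nth_sup:
  fixes f g :: "'a::comm_ring_1 fls"
  assumes "finite A" "\<And>i. f $$ i \<noteq> 0 \<Longrightarrow> g $$ (n - i) \<noteq> 0 \<Longrightarrow> i \<in> A"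
  shows "(f * g) $$ n = (\<Sum>i\<in>A. f $$ i * g $$ (n - i))"
proof -
  have "(f * g) $$ n = (\<Sum>i=fls_subdegree f..n - fls_subdegree g. f $$ i * g $$ (n - i))"
    by (rule fls_times_nth(2))
  also have "\<dots> = (\<Sum>i\<in>A. f $$ i * g $$ (n - i))"
  proof (rule sum_eq_nonzero)
    fix i assume "f $$ i * g $$ (n - i) \<noteq> 0"
    then have "f $$ i \<noteq> 0" "g $$ (n - i) \<noteq> 0" by auto
    then show "i \<in> {fls_subdegree f..n - fls_subdegree g} \<and> i \<in> A"
      using assms(2) fls_subdegree_leI[of f i] fls_subdegree_leI[of g "n - i"] by auto
  qed (use assms in auto)
  finally show ?thesis .
qed

lemma Eplus_nth: "Eplus f $$ k = (if k < 0 then 0 else Abs_fls (\<lambda>m. ((of_int (m + k) :: complex) gchoose (nat k)) * f $$ (m + k)))"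
  unfolding Eplus_def by (rule nth_Abs_fls_lower_bound[of 0]) simp

lemma Eplus_nth_nth: "Eplus f $$ k $$ m = (if k < 0 then 0 else ((of_int (m + k) :: complex) gchoose (nat k)) * f $$ (m + k))"
proof (cases "k < 0")
  case False
  have "Abs_fls (\<lambda>m. ((of_int (m + k) :: complex) gchoose (nat k)) * f $$ (m + k)) $$ m = ((of_int (m + k) :: complex) gchoose (nat k)) * f $$ (m + k)"
    by (rule nth_Abs_fls_lower_bound[of "fls_subdegree f - k"]) simp
  then show ?thesis using False by (simp add: Eplus_nth)
qed (simp add: Eplus_nth)

lemma Eplus_add: "Eplus (f + g) = Eplus f + Eplus g"
  by (rule fls_eqI, rule fls_eqI) (simp add: Eplus_nth_nth algebra_simps)

lemma Eplus_0 [simp]: "Eplus 0 = 0"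
  by (rule fls_eqI, rule fls_eqI) (simp add: Eplus_nth_nth)

lemma Eplus_1 [simp]: "Eplus 1 = 1"
  by (rule fls_eqI, rule fls_eqI) (auto simp add: Eplus_nth_nth gbinomial_0_left simp del: of_int_add)

lemma Eplus_neg_zero: "k < 0 \<Longrightarrow> Eplus f $$ k = 0"
  by (simp add: Eplus_nth)

lemma Eplus_mult: "Eplus (f * g) = Eplus f * Eplus g"
proof (rule fls_eqI)
  fix k :: int
  show "Eplus (f * g) $$ k = (Eplus f * Eplus g) $$ k"
  proof (cases "k < 0")
    case True
    have "(Eplus f * Eplus g) $$ k = (\<Sum>i\<in>{}. Eplus f $$ i * Eplus g $$ (k - i))"
    proof (rule fls_times_nth_sup)
      fix i assume "Eplus f $$ i \<noteq> 0" "Eplus g $$ (k - i) \<noteq> 0"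
      then show "i \<in> {}" using True by (cases "i < 0") (auto simp: Eplus_neg_zero)
    qed simp
    then show ?thesis using True by (simp add: Eplus_neg_zero)
  next
    case False
    then have k0: "0 \<le> k" by simp
    show ?thesis
    proof (rule fls_eqI)
      fix m :: int
      define sf where "sf = fls_subdegree f"
      define sg where "sg = fls_subdegree g"
      define J where "J = {sf - k..m + k - sg}"
      define J' where "J' = {sf..m + k - sg}"
      define G where "G = (\<lambda>i \<alpha>. ((of_int \<alpha> :: complex) gchoose nat i) * f $$ \<alpha> *
                  (((of_int (m + k - \<alpha>)) gchoose nat (k - i)) * g $$ (m + k - \<alpha>)))"
      have "(Eplus f * Eplus g) $$ k = (\<Sum>i\<in>{0..k}. Eplus f $$ i * Eplus g $$ (k - i))"
      proof (rule fls_times_nth_sup)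
        fix i assume "Eplus f $$ i \<noteq> 0" "Eplus g $$ (k - i) \<noteq> 0"
        then show "i \<in> {0..k}" by (cases "i < 0"; cases "k - i < 0") (auto simp: Eplus_neg_zero)
      qed simp
      then have "(Eplus f * Eplus g) $$ k $$ m = (\<Sum>i\<in>{0..k}. (Eplus f $$ i * Eplus g $$ (k - i)) $$ m)"
        by (simp add: fls_nth_sum)
      also have "\<dots> = (\<Sum>i\<in>{0..k}. \<Sum>\<alpha>\<in>J'. G i \<alpha>)"
      proof (rule sum.cong)
        fix i assume i: "i \<in> {0..k}"
        have "(Eplus f $$ i * Eplus g $$ (k - i)) $$ m = (\<Sum>j\<in>J. Eplus f $$ i $$ j * Eplus g $$ (k - i) $$ (m - j))"
        proof (rule fls_times_nth_sup)
          fix j assume "Eplus f $$ i $$ j \<noteq> 0" "Eplus g $$ (k - i) $$ (m - j) \<noteq> 0"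
          then have "f $$ (j + i) \<noteq> 0" "g $$ (m - j + (k - i)) \<noteq> 0" by (auto simp: Eplus_nth_nth split: if_splits)
          then have "sf \<le> j + i" "sg \<le> m - j + (k - i)" unfolding sf_def sg_def by (auto intro: fls_subdegree_leI)
          then show "j \<in> J" using i unfolding J_def by auto
        qed (simp add: J_def)
        also have "\<dots> = (\<Sum>j\<in>J. G i (j + i))"
          by (rule sum.cong) (use i in \<open>auto simp: Eplus_nth_nth G_def algebra_simps\<close>)
        also have "\<dots> = (\<Sum>\<alpha>\<in>(\<lambda>j. j + i) ` J. G i \<alpha>)"
          by (subst sum.reindex) (auto simp: inj_on_def)
        also have "\<dots> = (\<Sum>\<alpha>\<in>J'. G i \<alpha>)"
        proof (rule sum_eq_nonzero)
          fix \<alpha> assume "G i \<alpha> \<noteq> 0"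
          then have "f $$ \<alpha> \<noteq> 0" "g $$ (m + k - \<alpha>) \<noteq> 0" by (auto simp: G_def)
          then have "sf \<le> \<alpha>" "sg \<le> m + k - \<alpha>" unfolding sf_def sg_def by (auto intro: fls_subdegree_leI)
          moreover have "\<alpha> = (\<alpha> - i) + i" by simp
          ultimately show "\<alpha> \<in> (\<lambda>j. j + i) ` J \<and> \<alpha> \<in> J'"
            using i unfolding J_def J'_def by (auto intro!: image_eqI[of \<alpha> _ "\<alpha> - i"])
        qed (auto simp: J_def J'_def)
        finally show "(Eplus f $$ i * Eplus g $$ (k - i)) $$ m = (\<Sum>\<alpha>\<in>J'. G i \<alpha>)" .
      qed simp
      also have "\<dots> = (\<Sum>\<alpha>\<in>J'. \<Sum>i\<in>{0..k}. G i \<alpha>)"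
        by (rule sum.swap)
      also have "\<dots> = (\<Sum>\<alpha>\<in>J'. (((of_int (m + k) :: complex) gchoose nat k)) * (f $$ \<alpha> * g $$ (m + k - \<alpha>)))"
      proof (rule sum.cong)
        fix \<alpha>
        have "(\<Sum>i\<in>{0..k}. G i \<alpha>) = (\<Sum>i\<in>{0..k}. ((of_int \<alpha> :: complex) gchoose nat i) * ((of_int (m + k - \<alpha>)) gchoose nat (k - i))) * (f $$ \<alpha> * g $$ (m + k - \<alpha>))"
          unfolding G_def sum_distrib_right by (rule sum.cong) (simp_all add: mult_ac)
        also have "(\<Sum>i\<in>{0..k}. ((of_int \<alpha> :: complex) gchoose nat i) * ((of_int (m + k - \<alpha>)) gchoose nat (k - i)))
            = (\<Sum>i\<in>{0..nat k}. ((of_int \<alpha> :: complex) gchoose i) * ((of_int (m + k - \<alpha>)) gchoose (nat k - i)))"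
        proof -
          have "{0..k} = int ` {0..nat k}" using k0 by (auto simp: image_iff intro!: bexI[of _ "nat _"])
          then show ?thesis using k0 by (simp add: sum.reindex nat_diff_distrib)
        qed
        also have "\<dots> = ((of_int \<alpha> + of_int (m + k - \<alpha>)) :: complex) gchoose nat k"
          by (rule gbinomial_Vandermonde)
        finally show "(\<Sum>i\<in>{0..k}. G i \<alpha>) = (((of_int (m + k) :: complex) gchoose nat k)) * (f $$ \<alpha> * g $$ (m + k - \<alpha>))"
          by simp
      qed simp
      also have "\<dots> = ((of_int (m + k) :: complex) gchoose nat k) * (f * g) $$ (m + k)"
      proof -
        have "(f * g) $$ (m + k) = (\<Sum>\<alpha>\<in>J'. f $$ \<alpha> * g $$ (m + k - \<alpha>))"
        proof (rule fls_times_nth_sup)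
          fix i assume "f $$ i \<noteq> 0" "g $$ (m + k - i) \<noteq> 0"
          then have "fls_subdegree f \<le> i" "fls_subdegree g \<le> m + k - i" by (auto intro: fls_subdegree_leI)
          then show "i \<in> J'" unfolding J'_def sf_def sg_def by auto
        qed (simp add: J'_def)
        then show ?thesis by (simp add: sum_distrib_left)
      qed
      also have "\<dots> = Eplus (f * g) $$ k $$ m"
        using k0 by (simp add: Eplus_nth_nth)
      finally show "Eplus (f * g) $$ k $$ m = (Eplus f * Eplus g) $$ k $$ m" by simp
    qed
  qed
qed


definition rhom :: "(complex fls \<Rightarrow> complex fls fls) \<Rightarrow> bool" where
  "rhom \<phi> \<longleftrightarrow> (\<forall>x y. \<phi> (x + y) = \<phi> x + \<phi> y) \<and> (\<forall>x y. \<phi> (x * y) = \<phi> x * \<phi> y) \<and> \<phi> 1 = 1 \<and> \<phi> 0 = 0"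

lemma rhom_sum: "rhom \<phi> \<Longrightarrow> \<phi> (sum f A) = (\<Sum>x\<in>A. \<phi> (f x))"
  by (induction A rule: infinite_finite_induct) (simp_all add: rhom_def)

lemma rhom_Eplus: "rhom Eplus"
  by (simp add: rhom_def Eplus_add Eplus_mult)

lemma rhom_Ein: "rhom Ein"
  by (simp add: rhom_def Ein_def fls_plus_const)

definition nin :: "complex fls fls \<Rightarrow> complex fls fls" where
  "nin g = Abs_fls (\<lambda>k. negvar (g $$ k))"

lemma nin_nth [simp]: "nin g $$ k = negvar (g $$ k)"
  unfolding nin_def by (rule nth_Abs_fls_lower_bound[of "fls_subdegree g"]) simp

lemma nin_nin [simp]: "nin (nin g) = g"
  by (rule fls_eqI) simp

lemma nin_0 [simp]: "nin 0 = 0"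
  by (rule fls_eqI) simp

lemma nin_1 [simp]: "nin 1 = 1"
  by (rule fls_eqI) simp

lemma nin_add: "nin (f + g) = nin f + nin g"
  by (rule fls_eqI) (simp add: negvar_add)

lemma nin_mult: "nin (f * g) = nin f * nin g"
proof (rule fls_eqI)
  fix k
  have "(nin f * nin g) $$ k = (\<Sum>i\<in>{fls_subdegree f..k - fls_subdegree g}. nin f $$ i * nin g $$ (k - i))"
  proof (rule fls_times_nth_sup)
    fix i assume "nin f $$ i \<noteq> 0" "nin g $$ (k - i) \<noteq> 0"
    then have "f $$ i \<noteq> 0" "g $$ (k - i) \<noteq> 0" by auto
    then have "fls_subdegree f \<le> i" "fls_subdegree g \<le> k - i" by (auto intro: fls_subdegree_leI)
    then show "i \<in> {fls_subdegree f..k - fls_subdegree g}" by auto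
  qed simp
  also have "\<dots> = negvar ((f * g) $$ k)"
    by (simp add: fls_times_nth(2) negvar_sum negvar_mult)
  finally show "nin (f * g) $$ k = (nin f * nin g) $$ k" by simp
qed

lemma nin_eq0_iff [simp]: "nin g = 0 \<longleftrightarrow> g = 0"
  by (metis nin_0 nin_nin)

lemma nin_Ein: "nin (Ein (negvar f)) = Ein f"
  by (rule fls_eqI) (simp add: Ein_def)

lemma Eminus_nth_nth: "Eminus f $$ k $$ m = (if k < 0 then 0 else (if even k then 1 else -1) * ((of_int (m + k) :: complex) gchoose (nat k)) * f $$ (m + k))"
proof (cases "k < 0")
  case False
  have "Abs_fls (\<lambda>m. (if even k then 1 else -1) * ((of_int (m + k) :: complex) gchoose (nat k)) * f $$ (m + k)) $$ m
     = (if even k then 1 else -1) * ((of_int (m + k) :: complex) gchoose (nat k)) * f $$ (m + k)"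
    by (rule nth_Abs_fls_lower_bound[of "fls_subdegree f - k"]) simp
  moreover have "Eminus f $$ k = Abs_fls (\<lambda>m. (if even k then 1 else -1) * ((of_int (m + k) :: complex) gchoose (nat k)) * f $$ (m + k))"
    unfolding Eminus_def using False by (subst nth_Abs_fls_lower_bound[of 0]) auto
  ultimately show ?thesis using False by simp
next
  case True
  have "Eminus f $$ k = 0"
    unfolding Eminus_def using True by (subst nth_Abs_fls_lower_bound[of 0]) auto
  then show ?thesis using True by simp
qed

lemma nin_Eplus: "nin (Eplus (negvar f)) = Eminus f"
proof (rule fls_eqI, rule fls_eqI)
  fix k m
  show "nin (Eplus (negvar f)) $$ k $$ m = Eminus f $$ k $$ m"
    by (simp add: negvar_nth Eplus_nth_nth Eminus_nth_nth)
qed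

lemma lookup_lin_ext_sup:
  assumes "finite A" "Poly_Mapping.keys t \<subseteq> A"
  shows "Poly_Mapping.lookup (lin_ext f t) j = (\<Sum>i\<in>A. Poly_Mapping.lookup t i * Poly_Mapping.lookup (f i) j)"
  by (simp add: lin_ext_superset[OF assms] lookup_sum)

definition k13 :: "'b smap \<Rightarrow> (complex fls \<Rightarrow> complex fls fls) \<Rightarrow> 'b \<times> 'b \<times> 'b \<Rightarrow> 'b t3" where
  "k13 K \<phi> = (\<lambda>(a, b, c). Poly_Mapping.Abs_poly_mapping (\<lambda>(p, b', q).
      if b' = b then \<phi> (Poly_Mapping.lookup (K (Poly_Mapping.single (a, c) 1)) (p, q)) else 0))"

definition k23 :: "'b smap \<Rightarrow> (complex fls \<Rightarrow> complex fls fls) \<Rightarrow> 'b \<times> 'b \<times> 'b \<Rightarrow> 'b t3" where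
  "k23 K \<phi> = (\<lambda>(a, b, c). Poly_Mapping.Abs_poly_mapping (\<lambda>(a', r, s).
      if a' = a then \<phi> (Poly_Mapping.lookup (K (Poly_Mapping.single (b, c) 1)) (r, s)) else 0))"

definition k12 :: "'b smap \<Rightarrow> (complex fls \<Rightarrow> complex fls fls) \<Rightarrow> 'b \<times> 'b \<times> 'b \<Rightarrow> 'b t3" where
  "k12 K \<phi> = (\<lambda>(a, b, c). Poly_Mapping.Abs_poly_mapping (\<lambda>(p, q, c').
      if c' = c then \<phi> (Poly_Mapping.lookup (K (Poly_Mapping.single (a, b) 1)) (p, q)) else 0))"

lemma S13_k13: "S13 K \<phi> = lin_ext (k13 K \<phi>)"
  by (simp add: S13_def k13_def)
lemma S23_k23: "S23 K \<phi> = lin_ext (k23 K \<phi>)"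
  by (simp add: S23_def k23_def)
lemma S12_k12: "S12 K \<phi> = lin_ext (k12 K \<phi>)"
  by (simp add: S12_def k12_def)

lemma lookup_k13:
  assumes "\<phi> 0 = 0"
  shows "Poly_Mapping.lookup (k13 K \<phi> (a, b, c)) (p, b', q) = (if b' = b then \<phi> (Poly_Mapping.lookup (K (Poly_Mapping.single (a, c) 1)) (p, q)) else 0)"
proof -
  let ?f = "\<lambda>(p, b', q). if b' = b then \<phi> (Poly_Mapping.lookup (K (Poly_Mapping.single (a, c) 1)) (p, q)) else 0"
  have "{x. ?f x \<noteq> 0} \<subseteq> (\<lambda>(p, q). (p, b, q)) ` Poly_Mapping.keys (K (Poly_Mapping.single (a, c) 1))"
  proof
    fix x assume xin: "x \<in> {x. ?f x \<noteq> 0}"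
    show "x \<in> (\<lambda>(p, q). (p, b, q)) ` Poly_Mapping.keys (K (Poly_Mapping.single (a, c) 1))"
    proof -
      obtain p b' q where x: "x = (p, b', q)" by (cases x) auto
      have "b' = b" "\<phi> (Poly_Mapping.lookup (K (Poly_Mapping.single (a, c) 1)) (p, q)) \<noteq> 0"
        using xin by (auto simp: x split: if_splits)
      then have "(p, q) \<in> Poly_Mapping.keys (K (Poly_Mapping.single (a, c) 1))"
        using assms by (auto simp: in_keys_iff)
      then show ?thesis unfolding x \<open>b' = b\<close> by (rule rev_image_eqI) simp
    qed
  qed
  then have fin: "finite {x. ?f x \<noteq> 0}" by (rule finite_subset) simp
  have "k13 K \<phi> (a, b, c) = Poly_Mapping.Abs_poly_mapping ?f" by (simp add: k13_def)
  then show ?thesis by (simp add: lookup_Abs_poly_mapping[OF fin])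
qed

lemma keys_k13:
  assumes "\<phi> 0 = 0"
  shows "Poly_Mapping.keys (k13 K \<phi> (a, b, c)) \<subseteq> (\<lambda>(p, q). (p, b, q)) ` Poly_Mapping.keys (K (Poly_Mapping.single (a, c) 1))"
proof
  fix x assume xin: "x \<in> Poly_Mapping.keys (k13 K \<phi> (a, b, c))"
  obtain p b' q where x: "x = (p, b', q)" by (cases x) auto
  have "b' = b" "\<phi> (Poly_Mapping.lookup (K (Poly_Mapping.single (a, c) 1)) (p, q)) \<noteq> 0"
    using xin by (auto simp: x in_keys_iff lookup_k13[of \<phi>, OF assms] split: if_splits)
  then have "(p, q) \<in> Poly_Mapping.keys (K (Poly_Mapping.single (a, c) 1))"
    using assms by (auto simp: in_keys_iff)
  then show "x \<in> (\<lambda>(p, q). (p, b, q)) ` Poly_Mapping.keys (K (Poly_Mapping.single (a, c) 1))"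
    unfolding x \<open>b' = b\<close> by (rule rev_image_eqI) simp
qed

lemma lookup_k23:
  assumes "\<phi> 0 = 0"
  shows "Poly_Mapping.lookup (k23 K \<phi> (a, b, c)) (a', r, s) = (if a' = a then \<phi> (Poly_Mapping.lookup (K (Poly_Mapping.single (b, c) 1)) (r, s)) else 0)"
proof -
  let ?f = "\<lambda>(a', r, s). if a' = a then \<phi> (Poly_Mapping.lookup (K (Poly_Mapping.single (b, c) 1)) (r, s)) else 0"
  have "{x. ?f x \<noteq> 0} \<subseteq> (\<lambda>(r, s). (a, r, s)) ` Poly_Mapping.keys (K (Poly_Mapping.single (b, c) 1))"
  proof
    fix x assume xin: "x \<in> {x. ?f x \<noteq> 0}"
    show "x \<in> (\<lambda>(r, s). (a, r, s)) ` Poly_Mapping.keys (K (Poly_Mapping.single (b, c) 1))"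
    proof -
      obtain a' r s where x: "x = (a', r, s)" by (cases x) auto
      have "a' = a" "\<phi> (Poly_Mapping.lookup (K (Poly_Mapping.single (b, c) 1)) (r, s)) \<noteq> 0"
        using xin by (auto simp: x split: if_splits)
      then have "(r, s) \<in> Poly_Mapping.keys (K (Poly_Mapping.single (b, c) 1))"
        using assms by (auto simp: in_keys_iff)
      then show ?thesis unfolding x \<open>a' = a\<close> by (rule rev_image_eqI) simp
    qed
  qed
  then have fin: "finite {x. ?f x \<noteq> 0}" by (rule finite_subset) simp
  have "k23 K \<phi> (a, b, c) = Poly_Mapping.Abs_poly_mapping ?f" by (simp add: k23_def)
  then show ?thesis by (simp add: lookup_Abs_poly_mapping[OF fin])
qed

lemma keys_k23:
  assumes "\<phi> 0 = 0"
  shows "Poly_Mapping.keys (k23 K \<phi> (a, b, c)) \<subseteq> (\<lambda>(r, s). (a, r, s)) ` Poly_Mapping.keys (K (Poly_Mapping.single (b, c) 1))"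
proof
  fix x assume xin: "x \<in> Poly_Mapping.keys (k23 K \<phi> (a, b, c))"
  obtain a' r s where x: "x = (a', r, s)" by (cases x) auto
  have "a' = a" "\<phi> (Poly_Mapping.lookup (K (Poly_Mapping.single (b, c) 1)) (r, s)) \<noteq> 0"
    using xin by (auto simp: x in_keys_iff lookup_k23[of \<phi>, OF assms] split: if_splits)
  then have "(r, s) \<in> Poly_Mapping.keys (K (Poly_Mapping.single (b, c) 1))"
    using assms by (auto simp: in_keys_iff)
  then show "x \<in> (\<lambda>(r, s). (a, r, s)) ` Poly_Mapping.keys (K (Poly_Mapping.single (b, c) 1))"
    unfolding x \<open>a' = a\<close> by (rule rev_image_eqI) simp
qed

lemma lookup_k12:
  assumes "\<phi> 0 = 0"
  shows "Poly_Mapping.lookup (k12 K \<phi> (a, b, c)) (p, q, c') = (if c' = c then \<phi> (Poly_Mapping.lookup (K (Poly_Mapping.single (a, b) 1)) (p, q)) else 0)"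
proof -
  let ?f = "\<lambda>(p, q, c'). if c' = c then \<phi> (Poly_Mapping.lookup (K (Poly_Mapping.single (a, b) 1)) (p, q)) else 0"
  have "{x. ?f x \<noteq> 0} \<subseteq> (\<lambda>(p, q). (p, q, c)) ` Poly_Mapping.keys (K (Poly_Mapping.single (a, b) 1))"
  proof
    fix x assume xin: "x \<in> {x. ?f x \<noteq> 0}"
    show "x \<in> (\<lambda>(p, q). (p, q, c)) ` Poly_Mapping.keys (K (Poly_Mapping.single (a, b) 1))"
    proof -
      obtain p q c' where x: "x = (p, q, c')" by (cases x) auto
      have "c' = c" "\<phi> (Poly_Mapping.lookup (K (Poly_Mapping.single (a, b) 1)) (p, q)) \<noteq> 0"
        using xin by (auto simp: x split: if_splits)
      then have "(p, q) \<in> Poly_Mapping.keys (K (Poly_Mapping.single (a, b) 1))"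
        using assms by (auto simp: in_keys_iff)
      then show ?thesis unfolding x \<open>c' = c\<close> by (rule rev_image_eqI) simp
    qed
  qed
  then have fin: "finite {x. ?f x \<noteq> 0}" by (rule finite_subset) simp
  have "k12 K \<phi> (a, b, c) = Poly_Mapping.Abs_poly_mapping ?f" by (simp add: k12_def)
  then show ?thesis by (simp add: lookup_Abs_poly_mapping[OF fin])
qed

lemma keys_k12:
  assumes "\<phi> 0 = 0"
  shows "Poly_Mapping.keys (k12 K \<phi> (a, b, c)) \<subseteq> (\<lambda>(p, q). (p, q, c)) ` Poly_Mapping.keys (K (Poly_Mapping.single (a, b) 1))"
proof
  fix x assume xin: "x \<in> Poly_Mapping.keys (k12 K \<phi> (a, b, c))"
  obtain p q c' where x: "x = (p, q, c')" by (cases x) auto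
  have "c' = c" "\<phi> (Poly_Mapping.lookup (K (Poly_Mapping.single (a, b) 1)) (p, q)) \<noteq> 0"
    using xin by (auto simp: x in_keys_iff lookup_k12[of \<phi>, OF assms] split: if_splits)
  then have "(p, q) \<in> Poly_Mapping.keys (K (Poly_Mapping.single (a, b) 1))"
    using assms by (auto simp: in_keys_iff)
  then show "x \<in> (\<lambda>(p, q). (p, q, c)) ` Poly_Mapping.keys (K (Poly_Mapping.single (a, b) 1))"
    unfolding x \<open>c' = c\<close> by (rule rev_image_eqI) simp
qed

lemma lookup_Sext: "Poly_Mapping.lookup (Sext K w) (u, v) = (\<Sum>x\<in>Poly_Mapping.keys w. Poly_Mapping.lookup w x * Poly_Mapping.lookup (K (Poly_Mapping.single x 1)) (u, v))"
  by (simp add: Sext_def lookup_lin_ext)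

lemma inv13:
  fixes K K' :: "'b smap"
  assumes \<phi>: "rhom \<phi>" and KK: "\<And>p. Sext K (K' (Poly_Mapping.single p 1)) = emb2 (Poly_Mapping.single p 1)"
  shows "S13 K \<phi> (S13 K' \<phi> X) = X"
proof -
  have \<phi>0: "\<phi> 0 = 0" and \<phi>1: "\<phi> 1 = 1" using \<phi> by (simp_all add: rhom_def)
  have \<phi>m: "\<phi> (x * y) = \<phi> x * \<phi> y" for x y using \<phi> by (simp add: rhom_def)
  have key: "lin_ext (k13 K \<phi>) (k13 K' \<phi> i) = Poly_Mapping.single i 1" for i
  proof -
    obtain a b c where i: "i = (a, b, c)" by (cases i) auto
    show ?thesis
    proof (rule poly_mapping_eqI)
      fix j :: "'b \<times> 'b \<times> 'b"
      obtain u b' v where j: "j = (u, b', v)" by (cases j) auto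
      let ?W = "K' (Poly_Mapping.single (a, c) 1)"
      let ?A = "(\<lambda>(p, q). (p, b, q)) ` Poly_Mapping.keys ?W"
      have "Poly_Mapping.lookup (lin_ext (k13 K \<phi>) (k13 K' \<phi> i)) j
          = (\<Sum>x\<in>?A. Poly_Mapping.lookup (k13 K' \<phi> (a, b, c)) x * Poly_Mapping.lookup (k13 K \<phi> x) (u, b', v))"
        unfolding i j by (rule lookup_lin_ext_sup) (simp, rule keys_k13[of \<phi>, OF \<phi>0])
      also have "\<dots> = (\<Sum>x\<in>Poly_Mapping.keys ?W. \<phi> (Poly_Mapping.lookup ?W x) *
              (if b' = b then \<phi> (Poly_Mapping.lookup (K (Poly_Mapping.single x 1)) (u, v)) else 0))"
        by (subst sum.reindex) (auto simp: inj_on_def lookup_k13[of \<phi>, OF \<phi>0] intro!: sum.cong)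
      also have "\<dots> = (if b' = b then \<phi> (Poly_Mapping.lookup (Sext K ?W) (u, v)) else 0)"
        by (simp add: lookup_Sext rhom_sum[OF \<phi>] \<phi>m)
      also have "\<dots> = Poly_Mapping.lookup (Poly_Mapping.single i 1) j"
        using KK by (auto simp: lookup_emb2 lookup_single when_def i j \<phi>0 \<phi>1)
      finally show "Poly_Mapping.lookup (lin_ext (k13 K \<phi>) (k13 K' \<phi> i)) j = Poly_Mapping.lookup (Poly_Mapping.single i 1) j" .
    qed
  qed
  show ?thesis
    by (simp add: S13_k13 lin_ext_compose key lin_ext_id)
qed

lemma inv23:
  fixes K K' :: "'b smap"
  assumes \<phi>: "rhom \<phi>" and KK: "\<And>p. Sext K (K' (Poly_Mapping.single p 1)) = emb2 (Poly_Mapping.single p 1)"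
  shows "S23 K \<phi> (S23 K' \<phi> X) = X"
proof -
  have \<phi>0: "\<phi> 0 = 0" and \<phi>1: "\<phi> 1 = 1" using \<phi> by (simp_all add: rhom_def)
  have \<phi>m: "\<phi> (x * y) = \<phi> x * \<phi> y" for x y using \<phi> by (simp add: rhom_def)
  have key: "lin_ext (k23 K \<phi>) (k23 K' \<phi> i) = Poly_Mapping.single i 1" for i
  proof -
    obtain a b c where i: "i = (a, b, c)" by (cases i) auto
    show ?thesis
    proof (rule poly_mapping_eqI)
      fix j :: "'b \<times> 'b \<times> 'b"
      obtain b' u v where j: "j = (b', u, v)" by (cases j) auto
      let ?W = "K' (Poly_Mapping.single (b, c) 1)"
      let ?A = "(\<lambda>(r, s). (a, r, s)) ` Poly_Mapping.keys ?W"
      have "Poly_Mapping.lookup (lin_ext (k23 K \<phi>) (k23 K' \<phi> i)) j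
          = (\<Sum>x\<in>?A. Poly_Mapping.lookup (k23 K' \<phi> (a, b, c)) x * Poly_Mapping.lookup (k23 K \<phi> x) (b', u, v))"
        unfolding i j by (rule lookup_lin_ext_sup) (simp, rule keys_k23[of \<phi>, OF \<phi>0])
      also have "\<dots> = (\<Sum>x\<in>Poly_Mapping.keys ?W. \<phi> (Poly_Mapping.lookup ?W x) *
              (if b' = a then \<phi> (Poly_Mapping.lookup (K (Poly_Mapping.single x 1)) (u, v)) else 0))"
        by (subst sum.reindex) (auto simp: inj_on_def lookup_k23[of \<phi>, OF \<phi>0] intro!: sum.cong)
      also have "\<dots> = (if b' = a then \<phi> (Poly_Mapping.lookup (Sext K ?W) (u, v)) else 0)"
        by (simp add: lookup_Sext rhom_sum[OF \<phi>] \<phi>m)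
      also have "\<dots> = Poly_Mapping.lookup (Poly_Mapping.single i 1) j"
        using KK by (auto simp: lookup_emb2 lookup_single when_def i j \<phi>0 \<phi>1)
      finally show "Poly_Mapping.lookup (lin_ext (k23 K \<phi>) (k23 K' \<phi> i)) j = Poly_Mapping.lookup (Poly_Mapping.single i 1) j" .
    qed
  qed
  show ?thesis
    by (simp add: S23_k23 lin_ext_compose key lin_ext_id)
qed

lemma inv12:
  fixes K K' :: "'b smap"
  assumes \<phi>: "rhom \<phi>" and KK: "\<And>p. Sext K (K' (Poly_Mapping.single p 1)) = emb2 (Poly_Mapping.single p 1)"
  shows "S12 K \<phi> (S12 K' \<phi> X) = X"
proof -
  have \<phi>0: "\<phi> 0 = 0" and \<phi>1: "\<phi> 1 = 1" using \<phi> by (simp_all add: rhom_def)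
  have \<phi>m: "\<phi> (x * y) = \<phi> x * \<phi> y" for x y using \<phi> by (simp add: rhom_def)
  have key: "lin_ext (k12 K \<phi>) (k12 K' \<phi> i) = Poly_Mapping.single i 1" for i
  proof -
    obtain a b c where i: "i = (a, b, c)" by (cases i) auto
    show ?thesis
    proof (rule poly_mapping_eqI)
      fix j :: "'b \<times> 'b \<times> 'b"
      obtain u v b' where j: "j = (u, v, b')" by (cases j) auto
      let ?W = "K' (Poly_Mapping.single (a, b) 1)"
      let ?A = "(\<lambda>(p, q). (p, q, c)) ` Poly_Mapping.keys ?W"
      have "Poly_Mapping.lookup (lin_ext (k12 K \<phi>) (k12 K' \<phi> i)) j
          = (\<Sum>x\<in>?A. Poly_Mapping.lookup (k12 K' \<phi> (a, b, c)) x * Poly_Mapping.lookup (k12 K \<phi> x) (u, v, b'))"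
        unfolding i j by (rule lookup_lin_ext_sup) (simp, rule keys_k12[of \<phi>, OF \<phi>0])
      also have "\<dots> = (\<Sum>x\<in>Poly_Mapping.keys ?W. \<phi> (Poly_Mapping.lookup ?W x) *
              (if b' = c then \<phi> (Poly_Mapping.lookup (K (Poly_Mapping.single x 1)) (u, v)) else 0))"
        by (subst sum.reindex) (auto simp: inj_on_def lookup_k12[of \<phi>, OF \<phi>0] intro!: sum.cong)
      also have "\<dots> = (if b' = c then \<phi> (Poly_Mapping.lookup (Sext K ?W) (u, v)) else 0)"
        by (simp add: lookup_Sext rhom_sum[OF \<phi>] \<phi>m)
      also have "\<dots> = Poly_Mapping.lookup (Poly_Mapping.single i 1) j"
        using KK by (auto simp: lookup_emb2 lookup_single when_def i j \<phi>0 \<phi>1)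
      finally show "Poly_Mapping.lookup (lin_ext (k12 K \<phi>) (k12 K' \<phi> i)) j = Poly_Mapping.lookup (Poly_Mapping.single i 1) j" .
    qed
  qed
  show ?thesis
    by (simp add: S12_k12 lin_ext_compose key lin_ext_id)
qed


type_synonym 'b fam = "int \<Rightarrow> ('b \<times> 'b \<Rightarrow>\<^sub>0 complex fls)"

definition lb :: "'b fam \<Rightarrow> bool" where
  "lb F \<longleftrightarrow> (\<exists>N. \<forall>n<N. F n = 0)"

definition star :: "complex fls fls \<Rightarrow> 'b fam \<Rightarrow> 'b fam" where
  "star g F n = (\<Sum>k\<in>{k. g $$ k \<noteq> 0 \<and> F (n - k) \<noteq> 0}. smul (g $$ k) (F (n - k)))"

lemma lbE: assumes "lb F" obtains N where "\<And>n. n < N \<Longrightarrow> F n = 0"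
proof -
  from assms obtain N where "\<forall>n<N. F n = 0" unfolding lb_def by blast
  then show thesis using that by blast
qed

lemma star_sup:
  assumes "lb F" "finite A" "\<And>k. g $$ k \<noteq> 0 \<Longrightarrow> F (n - k) \<noteq> 0 \<Longrightarrow> k \<in> A"
  shows "star g F n = (\<Sum>k\<in>A. smul (g $$ k) (F (n - k)))"
proof -
  obtain N where N: "\<And>n. n < N \<Longrightarrow> F n = 0" using assms(1) by (rule lbE) auto
  have sub: "{k. g $$ k \<noteq> 0 \<and> F (n - k) \<noteq> 0} \<subseteq> {fls_subdegree g..n - N}"
  proof
    fix k assume "k \<in> {k. g $$ k \<noteq> 0 \<and> F (n - k) \<noteq> 0}"
    then have "g $$ k \<noteq> 0" "F (n - k) \<noteq> 0" by auto
    then show "k \<in> {fls_subdegree g..n - N}" using N[of "n - k"] fls_subdegree_leI[of g k] by force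
  qed
  have "star g F n = (\<Sum>k\<in>{k. g $$ k \<noteq> 0 \<and> F (n - k) \<noteq> 0}. smul (g $$ k) (F (n - k)))"
    by (simp add: star_def)
  also have "\<dots> = (\<Sum>k\<in>A. smul (g $$ k) (F (n - k)))"
  proof (rule sum_eq_nonzero)
    show "finite {k. g $$ k \<noteq> 0 \<and> F (n - k) \<noteq> 0}" using sub by (rule finite_subset) simp
  next
    fix k assume "smul (g $$ k) (F (n - k)) \<noteq> 0"
    then have "g $$ k \<noteq> 0" "F (n - k) \<noteq> 0" by auto
    then show "k \<in> {k. g $$ k \<noteq> 0 \<and> F (n - k) \<noteq> 0} \<and> k \<in> A" using assms(3) by auto
  qed (use assms in auto)
  finally show ?thesis .
qed

lemma star_int:
  assumes N: "\<And>n. n < N \<Longrightarrow> F n = 0"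
  shows "star g F n = (\<Sum>k\<in>{fls_subdegree g..n - N}. smul (g $$ k) (F (n - k)))"
proof (rule star_sup)
  show "lb F" using N unfolding lb_def by blast
next
  fix k assume "g $$ k \<noteq> 0" "F (n - k) \<noteq> 0"
  then show "k \<in> {fls_subdegree g..n - N}" using N[of "n - k"] fls_subdegree_leI[of g k] by force
qed simp

lemma lb_star:
  assumes "lb F" shows "lb (star g F)"
proof -
  obtain N where N: "\<And>n. n < N \<Longrightarrow> F n = 0" using assms by (rule lbE) auto
  have "star g F n = 0" if "n < N + fls_subdegree g" for n
    using that by (simp add: star_int[OF N])
  then show ?thesis unfolding lb_def by blast
qed

lemma lb_add: "lb F \<Longrightarrow> lb G \<Longrightarrow> lb (\<lambda>n. F n + G n)"
  unfolding lb_def by (metis add.right_neutral min.strict_boundedE)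

lemma lb_zero [simp]: "lb (\<lambda>n. 0)"
  unfolding lb_def by simp

lemma lb_sum: "(\<And>i. i \<in> A \<Longrightarrow> lb (F i)) \<Longrightarrow> lb (\<lambda>n. \<Sum>i\<in>A. F i n)"
proof (induction A rule: infinite_finite_induct)
  case (insert x F)
  then show ?case by (simp add: lb_add)
qed simp_all

lemma star_add_left:
  assumes "lb F"
  shows "star (f + g) F n = star f F n + star g F n"
proof -
  obtain N where N: "\<And>n. n < N \<Longrightarrow> F n = 0" using assms by (rule lbE) auto
  let ?A = "{min (fls_subdegree f) (fls_subdegree g)..n - N}"
  have "star (f + g) F n = (\<Sum>k\<in>?A. smul ((f + g) $$ k) (F (n - k)))"
  proof (rule star_sup[OF assms])
    fix k assume "(f + g) $$ k \<noteq> 0" "F (n - k) \<noteq> 0"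
    then have "f $$ k \<noteq> 0 \<or> g $$ k \<noteq> 0" "n - k \<ge> N" using N[of "n-k"] by force+
    then show "k \<in> ?A" using fls_subdegree_leI[of f k] fls_subdegree_leI[of g k] by auto
  qed simp
  moreover have "star f F n = (\<Sum>k\<in>?A. smul (f $$ k) (F (n - k)))"
  proof (rule star_sup[OF assms])
    fix k assume "f $$ k \<noteq> 0" "F (n - k) \<noteq> 0"
    then show "k \<in> ?A" using N[of "n-k"] fls_subdegree_leI[of f k] by force
  qed simp
  moreover have "star g F n = (\<Sum>k\<in>?A. smul (g $$ k) (F (n - k)))"
  proof (rule star_sup[OF assms])
    fix k assume "g $$ k \<noteq> 0" "F (n - k) \<noteq> 0"
    then show "k \<in> ?A" using N[of "n-k"] fls_subdegree_leI[of g k] by force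
  qed simp
  ultimately show ?thesis by (simp add: add_smul sum.distrib)
qed

lemma star_add_right:
  assumes "lb F" "lb G"
  shows "star g (\<lambda>n. F n + G n) n = star g F n + star g G n"
proof -
  obtain N1 where N1: "\<And>n. n < N1 \<Longrightarrow> F n = 0" using assms(1) by (rule lbE) auto
  obtain N2 where N2: "\<And>n. n < N2 \<Longrightarrow> G n = 0" using assms(2) by (rule lbE) auto
  define N where "N = min N1 N2"
  have N1': "F n = 0" if "n < N" for n using N1 that by (simp add: N_def)
  have N2': "G n = 0" if "n < N" for n using N2 that by (simp add: N_def)
  have N3: "F n + G n = 0" if "n < N" for n using N1' N2' that by simp
  show ?thesis
    by (simp add: star_int[OF N1'] star_int[OF N2'] star_int[of N "\<lambda>n. F n + G n", OF N3] smul_add sum.distrib)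
qed

lemma star_zero_left [simp]: "star 0 F = (\<lambda>n. 0)"
  by (rule ext) (simp add: star_def)

lemma star_zero_right [simp]: "star g (\<lambda>n. 0) = (\<lambda>n. 0)"
  by (rule ext) (simp add: star_def)

lemma star_sum_right:
  assumes "\<And>i. i \<in> A \<Longrightarrow> lb (F i)"
  shows "star g (\<lambda>n. \<Sum>i\<in>A. F i n) n = (\<Sum>i\<in>A. star g (F i) n)"
  using assms
proof (induction A rule: infinite_finite_induct)
  case (insert x A)
  have "star g (\<lambda>n. \<Sum>i\<in>insert x A. F i n) n = star g (\<lambda>n. F x n + (\<Sum>i\<in>A. F i n)) n"
    using insert by simp
  also have "\<dots> = star g (F x) n + star g (\<lambda>n. \<Sum>i\<in>A. F i n) n"
    by (rule star_add_right) (use insert in \<open>auto intro: lb_sum\<close>)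
  finally show ?case using insert by simp
qed simp_all

lemma star_mult:
  assumes "lb F"
  shows "star (f * g) F n = star f (star g F) n"
proof -
  obtain N where N: "\<And>n. n < N \<Longrightarrow> F n = 0" using assms by (rule lbE) auto
  define sf where "sf = fls_subdegree f"
  define sg where "sg = fls_subdegree g"
  define A where "A = {sf + sg..n - N}"
  define I where "I = {sf..n - N - sg}"
  define L where "L = {sg..n - N - sf}"
  have Nsg: "star g F m = 0" if "m < N + sg" for m
    using that by (simp add: star_int[OF N] sg_def)
  have "star f (star g F) n = (\<Sum>i\<in>I. smul (f $$ i) (star g F (n - i)))"
  proof (rule star_sup[OF lb_star[OF assms]])
    fix i assume "f $$ i \<noteq> 0" "star g F (n - i) \<noteq> 0"
    then show "i \<in> I" using Nsg[of "n - i"] fls_subdegree_leI[of f i] unfolding I_def sf_def by force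
  qed (simp add: I_def)
  also have "\<dots> = (\<Sum>i\<in>I. \<Sum>k\<in>A. smul (f $$ i * g $$ (k - i)) (F (n - k)))"
  proof (rule sum.cong)
    fix i assume i: "i \<in> I"
    have "star g F (n - i) = (\<Sum>l\<in>L. smul (g $$ l) (F (n - i - l)))"
    proof (rule star_sup[OF assms])
      fix l assume "g $$ l \<noteq> 0" "F (n - i - l) \<noteq> 0"
      then show "l \<in> L" using i N[of "n - i - l"] fls_subdegree_leI[of g l] unfolding L_def I_def sg_def by force
    qed (simp add: L_def)
    then have "smul (f $$ i) (star g F (n - i)) = (\<Sum>l\<in>L. smul (f $$ i * g $$ l) (F (n - i - l)))"
      by (simp add: smul_sum smul_smul)
    also have "\<dots> = (\<Sum>k\<in>(\<lambda>l. l + i) ` L. smul (f $$ i * g $$ (k - i)) (F (n - k)))"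
      by (subst sum.reindex) (auto simp: inj_on_def algebra_simps)
    also have "\<dots> = (\<Sum>k\<in>A. smul (f $$ i * g $$ (k - i)) (F (n - k)))"
    proof (rule sum_eq_nonzero)
      fix k assume "smul (f $$ i * g $$ (k - i)) (F (n - k)) \<noteq> 0"
      then have "g $$ (k - i) \<noteq> 0" "F (n - k) \<noteq> 0" by auto
      then have "sg \<le> k - i" "N \<le> n - k" using N[of "n-k"] fls_subdegree_leI[of g "k - i"] unfolding sg_def by force+
      moreover have "k = (k - i) + i" by simp
      ultimately show "k \<in> (\<lambda>l. l + i) ` L \<and> k \<in> A"
        using i unfolding L_def A_def I_def by (auto intro!: image_eqI[of k _ "k - i"])
    qed (simp_all add: L_def A_def)
    finally show "smul (f $$ i) (star g F (n - i)) = (\<Sum>k\<in>A. smul (f $$ i * g $$ (k - i)) (F (n - k)))" .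
  qed simp
  also have "\<dots> = (\<Sum>k\<in>A. \<Sum>i\<in>I. smul (f $$ i * g $$ (k - i)) (F (n - k)))"
    by (rule sum.swap)
  also have "\<dots> = (\<Sum>k\<in>A. smul ((f * g) $$ k) (F (n - k)))"
  proof (rule sum.cong)
    fix k assume k: "k \<in> A"
    have "(f * g) $$ k = (\<Sum>i\<in>I. f $$ i * g $$ (k - i))"
    proof (rule fls_times_nth_sup)
      fix i assume "f $$ i \<noteq> 0" "g $$ (k - i) \<noteq> 0"
      then show "i \<in> I" using k fls_subdegree_leI[of f i] fls_subdegree_leI[of g "k - i"]
        unfolding I_def A_def sf_def sg_def by force
    qed (simp add: I_def)
    then show "(\<Sum>i\<in>I. smul (f $$ i * g $$ (k - i)) (F (n - k))) = smul ((f * g) $$ k) (F (n - k))"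
      by (simp add: sum_smul)
  qed simp
  also have "\<dots> = star (f * g) F n"
  proof (rule star_sup[OF assms, symmetric])
    fix k assume "(f * g) $$ k \<noteq> 0" "F (n - k) \<noteq> 0"
    then have "sf + sg \<le> k" "N \<le> n - k"
      using N[of "n - k"] fls_times_nth_eq0[of k f g] unfolding sf_def sg_def by force+
    then show "k \<in> A" unfolding A_def by auto
  qed (simp add: A_def)
  finally show ?thesis by simp
qed


definition Yf :: "('i \<Rightarrow> 'b fam) \<Rightarrow> ('i \<Rightarrow>\<^sub>0 complex fls fls) \<Rightarrow> 'b fam" where
  "Yf E H n = (\<Sum>i\<in>Poly_Mapping.keys H. star (Poly_Mapping.lookup H i) (E i) n)"

lemma Yf_sup:
  assumes "finite A" "Poly_Mapping.keys H \<subseteq> A"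
  shows "Yf E H n = (\<Sum>i\<in>A. star (Poly_Mapping.lookup H i) (E i) n)"
  unfolding Yf_def by (rule sum.mono_neutral_left) (use assms in \<open>auto simp: in_keys_iff\<close>)

lemma lb_Yf: "(\<And>i. lb (E i)) \<Longrightarrow> lb (Yf E H)"
proof -
  assume "\<And>i. lb (E i)"
  then have "lb (\<lambda>n. \<Sum>i\<in>Poly_Mapping.keys H. star (Poly_Mapping.lookup H i) (E i) n)"
    by (intro lb_sum lb_star)
  then show ?thesis by (simp add: Yf_def[abs_def])
qed

lemma Yf_add:
  assumes "\<And>i. lb (E i)"
  shows "Yf E (H1 + H2) n = Yf E H1 n + Yf E H2 n"
proof -
  let ?A = "Poly_Mapping.keys H1 \<union> Poly_Mapping.keys H2"
  have "Yf E (H1 + H2) n = (\<Sum>i\<in>?A. star (Poly_Mapping.lookup (H1 + H2) i) (E i) n)"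
    by (rule Yf_sup) (simp_all add: keys_add)
  also have "\<dots> = (\<Sum>i\<in>?A. star (Poly_Mapping.lookup H1 i) (E i) n + star (Poly_Mapping.lookup H2 i) (E i) n)"
    by (simp add: lookup_add star_add_left[OF assms])
  also have "\<dots> = Yf E H1 n + Yf E H2 n"
    by (simp add: sum.distrib Yf_sup[of ?A H1] Yf_sup[of ?A H2])
  finally show ?thesis .
qed

lemma Yf_smul:
  assumes "\<And>i. lb (E i)"
  shows "Yf E (smul g H) n = star g (Yf E H) n"
proof -
  have "Yf E (smul g H) n = (\<Sum>i\<in>Poly_Mapping.keys H. star (g * Poly_Mapping.lookup H i) (E i) n)"
    by (subst Yf_sup[of "Poly_Mapping.keys H"]) (simp_all add: keys_smul_sub)
  also have "\<dots> = (\<Sum>i\<in>Poly_Mapping.keys H. star g (star (Poly_Mapping.lookup H i) (E i)) n)"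
    by (simp add: star_mult[OF assms])
  also have "\<dots> = star g (\<lambda>n. \<Sum>i\<in>Poly_Mapping.keys H. star (Poly_Mapping.lookup H i) (E i) n) n"
    by (rule star_sum_right[symmetric]) (simp add: lb_star assms)
  finally show ?thesis by (simp add: Yf_def[abs_def])
qed

lemma Yf_single: "Yf E (Poly_Mapping.single i c) n = star c (E i) n"
  by (subst Yf_sup[of "{i}"]) auto

lemma Yf_zero [simp]: "Yf E 0 n = 0"
  by (simp add: Yf_def)

lemma hom_sum:
  fixes \<Phi> :: "'a::comm_monoid_add \<Rightarrow> 'c::ab_group_add"
  assumes "\<And>a b. \<Phi> (a + b) = \<Phi> a + \<Phi> b"
  shows "\<Phi> (sum f A) = (\<Sum>x\<in>A. \<Phi> (f x))"
proof -
  have h: "\<Phi> (0 + 0) = \<Phi> 0 + \<Phi> 0" by (rule assms)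
  have z: "\<Phi> 0 = 0" using h by (simp only: add_0_left) (rule add_left_imp_eq[of "\<Phi> 0"], simp)
  show ?thesis by (induction A rule: infinite_finite_induct) (simp_all add: assms z)
qed

lemma star_hom:
  fixes \<Phi> :: "('b \<times> 'b \<Rightarrow>\<^sub>0 complex fls) \<Rightarrow> ('c \<times> 'c \<Rightarrow>\<^sub>0 complex fls)"
  assumes F: "lb F"
    and add: "\<And>a b. \<Phi> (a + b) = \<Phi> a + \<Phi> b"
    and sm: "\<And>c a. \<Phi> (smul c a) = smul (\<psi> c) (\<Phi> a)"
    and \<psi>0: "\<psi> 0 = 0" and g': "\<And>k. g' $$ k = \<psi> (g $$ k)"
  shows "\<Phi> (star g F n) = star g' (\<lambda>m. \<Phi> (F m)) n"
proof -
  obtain N where N: "\<And>n. n < N \<Longrightarrow> F n = 0" using F by (rule lbE) auto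
  have h: "\<Phi> (0 + 0) = \<Phi> 0 + \<Phi> 0" by (rule add)
  have z: "\<Phi> 0 = 0" using h by (simp only: add_0_left) (rule add_left_imp_eq[of "\<Phi> 0"], simp)
  have lbF: "lb (\<lambda>m. \<Phi> (F m))" unfolding lb_def using N z by (intro exI[of _ N]) simp
  have "\<Phi> (star g F n) = (\<Sum>k\<in>{fls_subdegree g..n - N}. smul (\<psi> (g $$ k)) (\<Phi> (F (n - k))))"
    by (simp add: star_int[OF N] hom_sum[of \<Phi>, OF add] sm)
  also have "\<dots> = star g' (\<lambda>m. \<Phi> (F m)) n"
  proof -
    have "star g' (\<lambda>m. \<Phi> (F m)) n = (\<Sum>k\<in>{fls_subdegree g..n - N}. smul (g' $$ k) (\<Phi> (F (n - k))))"
    proof (rule star_sup[OF lbF])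
      fix k assume "g' $$ k \<noteq> 0" "\<Phi> (F (n - k)) \<noteq> 0"
      then have "g $$ k \<noteq> 0" "F (n - k) \<noteq> 0" using g' \<psi>0 z by auto
      then show "k \<in> {fls_subdegree g..n - N}" using N[of "n - k"] fls_subdegree_leI[of g k] by force
    qed simp
    then show ?thesis by (simp add: g')
  qed
  finally show ?thesis .
qed

lemma Sext_star: "lb F \<Longrightarrow> Sext S (star g F n) = star g (\<lambda>m. Sext S (F m)) n"
  by (rule star_hom[where \<psi> = "\<lambda>c. c"]) (simp_all add: Sext_add Sext_smul)

lemma flip2_star: "lb F \<Longrightarrow> flip2 (star g F n) = star g (\<lambda>m. flip2 (F m)) n"
  by (rule star_hom[where \<psi> = "\<lambda>c. c"]) (simp_all add: flip2_add flip2_smul)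

lemma mapneg_smul: "Poly_Mapping.map negvar (smul c a) = smul (negvar c) (Poly_Mapping.map negvar a)"
  by (rule poly_mapping_eqI) (simp add: lookup_map0 negvar_mult)

lemma mapneg_add: "Poly_Mapping.map negvar (a + b) = Poly_Mapping.map negvar a + Poly_Mapping.map negvar b"
  by (rule map_add0) (simp_all add: negvar_add)

lemma mapneg_star: "lb F \<Longrightarrow> Poly_Mapping.map negvar (star g F n) = star (nin g) (\<lambda>m. Poly_Mapping.map negvar (F m)) n"
  by (rule star_hom[where \<psi> = negvar]) (simp_all add: mapneg_add mapneg_smul)

lemma ext_principle:
  fixes L R :: "('i \<Rightarrow>\<^sub>0 complex fls fls) \<Rightarrow> 'b fam"
  assumes addL: "\<And>a b n. L (a + b) n = L a n + L b n" and smL: "\<And>g a n. L (smul g a) n = star g (L a) n"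
    and addR: "\<And>a b n. R (a + b) n = R a n + R b n" and smR: "\<And>g a n. R (smul g a) n = star g (R a) n"
    and base: "\<And>i. L (Poly_Mapping.single i 1) = R (Poly_Mapping.single i 1)"
  shows "L H n = R H n"
proof -
  have expand: "Q H n = (\<Sum>i\<in>Poly_Mapping.keys H. star (Poly_Mapping.lookup H i) (Q (Poly_Mapping.single i 1)) n)"
    if addQ: "\<And>a b n. Q (a + b) n = Q a n + Q b n" and smQ: "\<And>g a n. Q (smul g a) n = star g (Q a) n"
    for Q :: "('i \<Rightarrow>\<^sub>0 complex fls fls) \<Rightarrow> 'b fam"
  proof -
    have "Q H n = Q (\<Sum>i\<in>Poly_Mapping.keys H. smul (Poly_Mapping.lookup H i) (Poly_Mapping.single i 1)) n"
      by (subst pm_expand') simp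
    also have "\<dots> = (\<Sum>i\<in>Poly_Mapping.keys H. Q (smul (Poly_Mapping.lookup H i) (Poly_Mapping.single i 1)) n)"
      by (rule hom_sum[where \<Phi> = "\<lambda>x. Q x n"]) (rule addQ)
    finally show ?thesis by (simp add: smQ)
  qed
  show ?thesis
    by (simp add: expand[of L, OF addL smL] expand[of R, OF addR smR] base)
qed


definition EL :: "'b vop \<Rightarrow> 'b \<times> 'b \<times> 'b \<Rightarrow> 'b fam" where
  "EL Y = (\<lambda>(p, r, s) m. emb2 (tens2 (Y (bvec p) (bvec r) m) (bvec s)))"

definition ER :: "'b vop \<Rightarrow> 'b \<times> 'b \<times> 'b \<Rightarrow> 'b fam" where
  "ER Y = (\<lambda>(p, r, s) m. emb2 (tens2 (bvec p) (Y (bvec r) (bvec s) m)))"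

lemma lookup_bvec: "Poly_Mapping.lookup (bvec a) b = (if b = a then 1 else 0)"
  by (simp add: bvec_def lookup_single when_def)

lemma tens2_zero_left [simp]: "tens2 0 v = 0"
  by (rule poly_mapping_eqI) (auto simp: tens2_def)

lemma tens2_zero_right [simp]: "tens2 u 0 = 0"
  by (rule poly_mapping_eqI) (auto simp: tens2_def)

lemma tens2_bvecR_eq0: "tens2 u (bvec s) = 0 \<longleftrightarrow> u = 0"
proof
  assume h: "tens2 u (bvec s) = 0"
  show "u = 0"
  proof (rule poly_mapping_eqI)
    fix a
    have "Poly_Mapping.lookup (tens2 u (bvec s)) (a, s) = 0" using h by simp
    then show "Poly_Mapping.lookup u a = Poly_Mapping.lookup 0 a" by (simp add: lookup_bvec)
  qed
qed simp

lemma tens2_bvecL_eq0: "tens2 (bvec p) u = 0 \<longleftrightarrow> u = 0"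
proof
  assume h: "tens2 (bvec p) u = 0"
  show "u = 0"
  proof (rule poly_mapping_eqI)
    fix a
    have "Poly_Mapping.lookup (tens2 (bvec p) u) (p, a) = 0" using h by simp
    then show "Poly_Mapping.lookup u a = Poly_Mapping.lookup 0 a" by (simp add: lookup_bvec)
  qed
qed simp

lemma emb2_eq0 [simp]: "emb2 x = 0 \<longleftrightarrow> x = 0"
proof
  assume "emb2 x = 0"
  then have "\<forall>p. Poly_Mapping.lookup (emb2 x) p = 0" by simp
  then show "x = 0" by (intro poly_mapping_eqI) (auto simp add: lookup_emb2)
next
  assume "x = 0" then show "emb2 x = 0" by (intro poly_mapping_eqI) (simp add: lookup_emb2)
qed

lemma lb_EL: "nonlocal_va Y vac \<Longrightarrow> lb (EL Y i)"
proof -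
  assume "nonlocal_va Y vac"
  then have tr: "\<forall>u v. \<exists>N. \<forall>k<N. Y u v k = 0" by (simp add: nonlocal_va_def)
  obtain p r s where i: "i = (p, r, s)" by (cases i) auto
  obtain N where "\<forall>k<N. Y (bvec p) (bvec r) k = 0" using tr by blast
  then show ?thesis unfolding lb_def i EL_def by (intro exI[of _ N]) simp
qed

lemma lb_ER: "nonlocal_va Y vac \<Longrightarrow> lb (ER Y i)"
proof -
  assume "nonlocal_va Y vac"
  then have tr: "\<forall>u v. \<exists>N. \<forall>k<N. Y u v k = 0" by (simp add: nonlocal_va_def)
  obtain p r s where i: "i = (p, r, s)" by (cases i) auto
  obtain N where "\<forall>k<N. Y (bvec r) (bvec s) k = 0" using tr by blast
  then show ?thesis unfolding lb_def i ER_def by (intro exI[of _ N]) simp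
qed

definition coef :: "int \<Rightarrow> ('b \<times> 'b \<Rightarrow>\<^sub>0 complex fls) \<Rightarrow> ('b \<times> 'b \<Rightarrow>\<^sub>0 complex)" where
  "coef m w = Poly_Mapping.map (\<lambda>f. f $$ m) w"

lemma lookup_coef: "Poly_Mapping.lookup (coef m w) p = Poly_Mapping.lookup w p $$ m"
  by (simp add: coef_def lookup_map0)

lemma coef_add: "coef m (a + b) = coef m a + coef m b"
  by (rule poly_mapping_eqI) (simp add: lookup_coef lookup_add)

lemma coef_sum: "coef m (sum f A) = (\<Sum>x\<in>A. coef m (f x))"
  by (rule hom_sum) (rule coef_add)

lemma coef_smul_emb2: "coef m (smul c (emb2 x)) = smul (c $$ m) x"
  by (rule poly_mapping_eqI) (simp add: lookup_coef lookup_emb2)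

lemma coef_inj: "(\<And>m. coef m a = coef m b) \<Longrightarrow> a = b"
  by (rule poly_mapping_eqI, rule fls_eqI) (metis lookup_coef)

lemma YL_app_Yf: "YL_app Y H m n = coef m (Yf (EL Y) H n)"
proof -
  have "coef m (Yf (EL Y) H n) = (\<Sum>i\<in>Poly_Mapping.keys H. coef m (star (Poly_Mapping.lookup H i) (EL Y i) n))"
    by (simp add: Yf_def coef_sum)
  also have "\<dots> = YL_app Y H m n"
    unfolding YL_app_def
  proof (rule sum.cong)
    fix i assume "i \<in> Poly_Mapping.keys H"
    obtain p r s where i: "i = (p, r, s)" by (cases i) auto
    have set: "{k. Poly_Mapping.lookup H i $$ k \<noteq> 0 \<and> EL Y i (n - k) \<noteq> 0}
      = {k. Poly_Mapping.lookup H (p, r, s) $$ k \<noteq> 0 \<and> Y (bvec p) (bvec r) (n - k) \<noteq> 0}"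
      by (simp add: i EL_def tens2_bvecR_eq0)
    show "coef m (star (Poly_Mapping.lookup H i) (EL Y i) n) = (case i of (p, r, s) \<Rightarrow>
        \<Sum>k\<in>{k. Poly_Mapping.lookup H (p, r, s) $$ k \<noteq> 0 \<and> Y (bvec p) (bvec r) (n - k) \<noteq> 0}.
           smul (Poly_Mapping.lookup H (p, r, s) $$ k $$ m) (tens2 (Y (bvec p) (bvec r) (n - k)) (bvec s)))"
      unfolding star_def set by (simp add: coef_sum i EL_def coef_smul_emb2)
  qed simp
  finally show ?thesis by simp
qed

lemma YR_app_Yf: "YR_app Y H m n = coef m (Yf (ER Y) H n)"
proof -
  have "coef m (Yf (ER Y) H n) = (\<Sum>i\<in>Poly_Mapping.keys H. coef m (star (Poly_Mapping.lookup H i) (ER Y i) n))"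
    by (simp add: Yf_def coef_sum)
  also have "\<dots> = YR_app Y H m n"
    unfolding YR_app_def
  proof (rule sum.cong)
    fix i assume "i \<in> Poly_Mapping.keys H"
    obtain p r s where i: "i = (p, r, s)" by (cases i) auto
    have set: "{k. Poly_Mapping.lookup H i $$ k \<noteq> 0 \<and> ER Y i (n - k) \<noteq> 0}
      = {k. Poly_Mapping.lookup H (p, r, s) $$ k \<noteq> 0 \<and> Y (bvec r) (bvec s) (n - k) \<noteq> 0}"
      by (simp add: i ER_def tens2_bvecL_eq0)
    show "coef m (star (Poly_Mapping.lookup H i) (ER Y i) n) = (case i of (p, r, s) \<Rightarrow>
        \<Sum>k\<in>{k. Poly_Mapping.lookup H (p, r, s) $$ k \<noteq> 0 \<and> Y (bvec r) (bvec s) (n - k) \<noteq> 0}.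
           smul (Poly_Mapping.lookup H (p, r, s) $$ k $$ m) (tens2 (bvec p) (Y (bvec r) (bvec s) (n - k))))"
      unfolding star_def set by (simp add: coef_sum i ER_def coef_smul_emb2)
  qed simp
  finally show ?thesis by simp
qed

lemma lookup_emb3: "Poly_Mapping.lookup (emb3 t) i = fls_const (fls_const (Poly_Mapping.lookup t i))"
  by (simp add: emb3_def lookup_map0)

lemma keys_emb3: "Poly_Mapping.keys (emb3 t) = Poly_Mapping.keys t"
  by (auto simp: in_keys_iff lookup_emb3)

lemma emb3_single1: "emb3 (Poly_Mapping.single i 1) = Poly_Mapping.single i 1"
  by (simp add: emb3_def)

lemma star_const: "lb F \<Longrightarrow> star (fls_const c) F n = smul c (F n)"
  by (subst star_sup[of F "{0}"]) (auto split: if_splits)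

lemma emb2_add: "emb2 (a + b) = emb2 a + emb2 b"
  by (rule poly_mapping_eqI) (simp add: lookup_emb2 lookup_add fls_plus_const)

lemma emb2_smul: "emb2 (smul c a) = smul (fls_const c) (emb2 a)"
  by (rule poly_mapping_eqI) (simp add: lookup_emb2)

lemma emb2_sum: "emb2 (sum f A) = (\<Sum>x\<in>A. emb2 (f x))"
  by (rule hom_sum) (rule emb2_add)

lemma Yf_emb3_L:
  assumes "nonlocal_va Y vac"
  shows "Yf (EL Y) (emb3 t) n = emb2 (YL Y t n)"
proof -
  have "Yf (EL Y) (emb3 t) n = (\<Sum>i\<in>Poly_Mapping.keys t. smul (fls_const (Poly_Mapping.lookup t i)) (EL Y i n))"
    by (simp add: Yf_def keys_emb3 lookup_emb3 star_const lb_EL[OF assms])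
  also have "\<dots> = emb2 (YL Y t n)"
    unfolding YL_def emb2_sum by (rule sum.cong) (auto simp: EL_def emb2_smul)
  finally show ?thesis .
qed

lemma Yf_emb3_R:
  assumes "nonlocal_va Y vac"
  shows "Yf (ER Y) (emb3 t) n = emb2 (YR Y t n)"
proof -
  have "Yf (ER Y) (emb3 t) n = (\<Sum>i\<in>Poly_Mapping.keys t. smul (fls_const (Poly_Mapping.lookup t i)) (ER Y i n))"
    by (simp add: Yf_def keys_emb3 lookup_emb3 star_const lb_ER[OF assms])
  also have "\<dots> = emb2 (YR Y t n)"
    unfolding YR_def emb2_sum by (rule sum.cong) (auto simp: ER_def emb2_smul)
  finally show ?thesis .
qed

lemma ext_equiv:
  assumes lbE: "\<And>i. lb (E i)"
    and Padd: "\<And>a b. P (a + b) = P a + P b" and Psm: "\<And>g a. P (smul g a) = smul g (P a)"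
  shows "(\<forall>t n. Sext S (Yf E (emb3 t) n) = Yf E (P (emb3 t)) n) \<longleftrightarrow> (\<forall>H n. Sext S (Yf E H n) = Yf E (P H) n)"
proof
  assume sp: "\<forall>t n. Sext S (Yf E (emb3 t) n) = Yf E (P (emb3 t)) n"
  show "\<forall>H n. Sext S (Yf E H n) = Yf E (P H) n"
  proof (intro allI)
    fix H n
    show "Sext S (Yf E H n) = Yf E (P H) n"
    proof (rule ext_principle[where L = "\<lambda>H n. Sext S (Yf E H n)" and R = "\<lambda>H n. Yf E (P H) n"])
      fix a b n show "Sext S (Yf E (a + b) n) = Sext S (Yf E a n) + Sext S (Yf E b n)"
        by (simp add: Yf_add[OF lbE] Sext_add)
    next
      fix g a n show "Sext S (Yf E (smul g a) n) = star g (\<lambda>n. Sext S (Yf E a n)) n"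
        by (simp add: Yf_smul[OF lbE] Sext_star lb_Yf[OF lbE])
    next
      fix a b n show "Yf E (P (a + b)) n = Yf E (P a) n + Yf E (P b) n"
        by (simp add: Yf_add[OF lbE] Padd)
    next
      fix g a n show "Yf E (P (smul g a)) n = star g (\<lambda>n. Yf E (P a) n) n"
        by (simp add: Yf_smul[OF lbE] Psm)
    next
      fix i show "(\<lambda>n. Sext S (Yf E (Poly_Mapping.single i 1) n)) = (\<lambda>n. Yf E (P (Poly_Mapping.single i 1)) n)"
        using sp emb3_single1[of i] by metis
    qed
  qed
qed (simp)

lemma P_A_add: "S23 S Ein (S13 S Eplus (a + b)) = S23 S Ein (S13 S Eplus a) + S23 S Ein (S13 S Eplus b)"
  by (simp add: S23_k23 S13_k13 lin_ext_add)
lemma P_A_smul: "S23 S Ein (S13 S Eplus (smul g a)) = smul g (S23 S Ein (S13 S Eplus a))"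
  by (simp add: S23_k23 S13_k13 lin_ext_smul)
lemma P_B_add: "S12 S Eminus (S13 S Ein (a + b)) = S12 S Eminus (S13 S Ein a) + S12 S Eminus (S13 S Ein b)"
  by (simp add: S12_k12 S13_k13 lin_ext_add)
lemma P_B_smul: "S12 S Eminus (S13 S Ein (smul g a)) = smul g (S12 S Eminus (S13 S Ein a))"
  by (simp add: S12_k12 S13_k13 lin_ext_smul)

lemma A_iff:
  assumes Y: "nonlocal_va Y vac" and lin: "smap_linear S"
  shows "(\<forall>t. S_YL S Y t = YL_app Y (S23 S Ein (S13 S Eplus (emb3 t))))
     \<longleftrightarrow> (\<forall>H n. Sext S (Yf (EL Y) H n) = Yf (EL Y) (S23 S Ein (S13 S Eplus H)) n)"
proof -
  have "(\<forall>t. S_YL S Y t = YL_app Y (S23 S Ein (S13 S Eplus (emb3 t))))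
     \<longleftrightarrow> (\<forall>t n. Sext S (Yf (EL Y) (emb3 t) n) = Yf (EL Y) (S23 S Ein (S13 S Eplus (emb3 t))) n)"
  proof -
    have e: "S_YL S Y t m n = coef m (Sext S (Yf (EL Y) (emb3 t) n))" for t m n
      by (simp add: S_YL_def coef_def Yf_emb3_L[OF Y] Sext_emb2[OF lin])
    show ?thesis
      by (auto simp: fun_eq_iff e YL_app_Yf intro: coef_inj)
  qed
  also have "\<dots> \<longleftrightarrow> (\<forall>H n. Sext S (Yf (EL Y) H n) = Yf (EL Y) (S23 S Ein (S13 S Eplus H)) n)"
    by (rule ext_equiv[OF lb_EL[OF Y] P_A_add P_A_smul])
  finally show ?thesis .
qed

lemma B_iff:
  assumes Y: "nonlocal_va Y vac" and lin: "smap_linear S"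
  shows "(\<forall>t. S_YR S Y t = YR_app Y (S12 S Eminus (S13 S Ein (emb3 t))))
     \<longleftrightarrow> (\<forall>H n. Sext S (Yf (ER Y) H n) = Yf (ER Y) (S12 S Eminus (S13 S Ein H)) n)"
proof -
  have "(\<forall>t. S_YR S Y t = YR_app Y (S12 S Eminus (S13 S Ein (emb3 t))))
     \<longleftrightarrow> (\<forall>t n. Sext S (Yf (ER Y) (emb3 t) n) = Yf (ER Y) (S12 S Eminus (S13 S Ein (emb3 t))) n)"
  proof -
    have e: "S_YR S Y t m n = coef m (Sext S (Yf (ER Y) (emb3 t) n))" for t m n
      by (simp add: S_YR_def coef_def Yf_emb3_R[OF Y] Sext_emb2[OF lin])
    show ?thesis
      by (auto simp: fun_eq_iff e YR_app_Yf intro: coef_inj)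
  qed
  also have "\<dots> \<longleftrightarrow> (\<forall>H n. Sext S (Yf (ER Y) H n) = Yf (ER Y) (S12 S Eminus (S13 S Ein H)) n)"
    by (rule ext_equiv[OF lb_ER[OF Y] P_B_add P_B_smul])
  finally show ?thesis .
qed


definition rot3 :: "('b \<times> 'b \<times> 'b \<Rightarrow>\<^sub>0 'r::zero) \<Rightarrow> ('b \<times> 'b \<times> 'b \<Rightarrow>\<^sub>0 'r)" where
  "rot3 X = Poly_Mapping.Abs_poly_mapping (\<lambda>(x, y, z). Poly_Mapping.lookup X (z, x, y))"

definition rho :: "'b \<times> 'b \<times> 'b \<Rightarrow> 'b \<times> 'b \<times> 'b" where
  "rho = (\<lambda>(a, b, c). (b, c, a))"

lemma inj_rho: "inj rho"
  by (auto simp: rho_def inj_def)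

lemma lookup_rot3 [simp]: "Poly_Mapping.lookup (rot3 X) (x, y, z) = Poly_Mapping.lookup X (z, x, y)"
proof -
  have "{v. (case v of (x, y, z) \<Rightarrow> Poly_Mapping.lookup X (z, x, y)) \<noteq> 0} = rho ` Poly_Mapping.keys X"
    by (force simp: in_keys_iff image_iff rho_def)
  then have "finite {v. (case v of (x, y, z) \<Rightarrow> Poly_Mapping.lookup X (z, x, y)) \<noteq> 0}" by simp
  then show ?thesis by (simp add: rot3_def)
qed

lemma lookup_rot3_rho: "Poly_Mapping.lookup (rot3 X) (rho i) = Poly_Mapping.lookup X i"
  by (cases i) (simp add: rho_def)

lemma keys_rot3: "Poly_Mapping.keys (rot3 X) = rho ` Poly_Mapping.keys X"
proof -
  have "Poly_Mapping.keys (rot3 X) = {v. Poly_Mapping.lookup (rot3 X) v \<noteq> 0}" by (simp add: in_keys_iff set_eq_iff)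
  also have "\<dots> = rho ` Poly_Mapping.keys X"
    by (force simp: in_keys_iff image_iff rho_def)
  finally show ?thesis .
qed

lemma rot3_add: "rot3 (a + b) = rot3 a + rot3 b"
  by (rule poly_mapping_eqI) (auto simp: lookup_add)

lemma rot3_smul: "rot3 (smul g a) = smul g (rot3 a)"
  by (rule poly_mapping_eqI) auto

lemma rot3_single: "rot3 (Poly_Mapping.single (a, b, c) g) = Poly_Mapping.single (b, c, a) g"
proof (rule poly_mapping_eqI)
  fix k :: "'a \<times> 'a \<times> 'a"
  obtain x y z where k: "k = (x, y, z)" by (cases k) auto
  show "Poly_Mapping.lookup (rot3 (Poly_Mapping.single (a, b, c) g)) k = Poly_Mapping.lookup (Poly_Mapping.single (b, c, a) g) k"
    by (simp add: k lookup_single when_def)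
qed

lemma rot3_rot3_rot3 [simp]: "rot3 (rot3 (rot3 X)) = X"
  by (rule poly_mapping_eqI) auto

definition negin :: "'b t3 \<Rightarrow> 'b t3" where
  "negin X = Poly_Mapping.map nin X"

lemma lookup_negin [simp]: "Poly_Mapping.lookup (negin X) i = nin (Poly_Mapping.lookup X i)"
  by (simp add: negin_def lookup_map0)

lemma keys_negin [simp]: "Poly_Mapping.keys (negin X) = Poly_Mapping.keys X"
  by (auto simp: in_keys_iff)

lemma negin_negin [simp]: "negin (negin X) = X"
  by (rule poly_mapping_eqI) simp

lemma negin_add: "negin (a + b) = negin a + negin b"
  by (rule poly_mapping_eqI) (simp add: lookup_add nin_add)

lemma negin_smul: "negin (smul g a) = smul (nin g) (negin a)"
  by (rule poly_mapping_eqI) (simp add: nin_mult)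

lemma negin_single1: "negin (Poly_Mapping.single i 1) = Poly_Mapping.single i 1"
  by (rule poly_mapping_eqI) (simp add: lookup_single when_def)

lemma nin_sum: "nin (sum f A) = (\<Sum>x\<in>A. nin (f x))"
  by (rule hom_sum) (rule nin_add)

lemma flip2_emb2: "flip2 (emb2 x) = emb2 (flip2 x)"
  by (simp add: emb2_def flip2_map)

lemma flip2_sum: "flip2 (sum (f :: _ \<Rightarrow> ('b \<times> 'b \<Rightarrow>\<^sub>0 complex fls)) A) = (\<Sum>x\<in>A. flip2 (f x))"
  by (rule hom_sum) (rule flip2_add)

lemma mapneg_sum: "Poly_Mapping.map negvar (sum f A) = (\<Sum>x\<in>A. Poly_Mapping.map negvar (f x))"
  by (rule hom_sum) (rule mapneg_add)

lemma YR_YL: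
  fixes Y :: "'b vop"
  assumes Y: "nonlocal_va Y vac"
  shows "Yf (ER Y) G n = flip2 (Yf (EL Y) (rot3 G) n)"
proof -
  have "Yf (EL Y) (rot3 G) n = (\<Sum>i\<in>Poly_Mapping.keys G. star (Poly_Mapping.lookup G i) (EL Y (rho i)) n)"
    by (simp add: Yf_def keys_rot3 sum.reindex inj_on_def inj_rho[unfolded inj_def] lookup_rot3_rho)
  then have "flip2 (Yf (EL Y) (rot3 G) n) = (\<Sum>i\<in>Poly_Mapping.keys G. star (Poly_Mapping.lookup G i) (\<lambda>m. flip2 (EL Y (rho i) m)) n)"
    by (simp add: flip2_sum flip2_star lb_EL[OF Y])
  also have "\<dots> = Yf (ER Y) G n"
    unfolding Yf_def
  proof (rule sum.cong)
    fix i :: "'b \<times> 'b \<times> 'b"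
    obtain a b c where i: "i = (a, b, c)" by (cases i) auto
    have "(\<lambda>m. flip2 (EL Y (rho i) m)) = ER Y i"
      by (rule ext) (simp add: i rho_def EL_def ER_def flip2_emb2 flip2_tens2)
    then show "star (Poly_Mapping.lookup G i) (\<lambda>m. flip2 (EL Y (rho i) m)) n = star (Poly_Mapping.lookup G i) (ER Y i) n"
      by simp
  qed simp
  finally show ?thesis by simp
qed

lemma Sext_flip2:
  "Sext S (flip2 w) = flip2 (Poly_Mapping.map negvar (Sext (Sinv S) (Poly_Mapping.map negvar w)))"
proof -
  have "Sext S (flip2 w) = Sext (Sinv (Sinv S)) (flip2 w)" by simp
  also have "\<dots> = tau (Sext (Sinv S) (tau (flip2 w)))" by (rule Sext_Sinv)
  also have "tau (flip2 w) = Poly_Mapping.map negvar w"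
    by (simp add: tau_def flip2_map)
  finally show ?thesis by (simp add: tau_def)
qed

lemma mapneg_EL: "Poly_Mapping.map negvar (EL Y i m) = EL Y i m"
proof -
  have "Poly_Mapping.map negvar (emb2 x) = emb2 x" for x :: "'b \<times> 'b \<Rightarrow>\<^sub>0 complex"
    by (rule poly_mapping_eqI) (simp add: lookup_map0 lookup_emb2)
  then show ?thesis by (cases i) (simp add: EL_def)
qed

lemma mapneg_Yf:
  assumes Y: "nonlocal_va Y vac"
  shows "Poly_Mapping.map negvar (Yf (EL Y) H n) = Yf (EL Y) (negin H) n"
  by (simp add: Yf_def mapneg_sum mapneg_star lb_EL[OF Y] mapneg_EL)

lemma mapneg_mapneg [simp]: "Poly_Mapping.map negvar (Poly_Mapping.map negvar w) = w"
  by (rule poly_mapping_eqI) (simp add: lookup_map0)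

lemma Ein_0 [simp]: "Ein 0 = 0" by (simp add: Ein_def)
lemma Eminus_0 [simp]: "Eminus 0 = 0"
  by (rule fls_eqI, rule fls_eqI) (simp add: Eminus_nth_nth)

lemma lookup_Sinv_single: "Poly_Mapping.lookup (Sinv S (Poly_Mapping.single (c, a) 1)) y = negvar (Poly_Mapping.lookup (S (Poly_Mapping.single (a, c) 1)) (prod.swap y))"
  by (simp add: Sinv_tau flip2_single lookup_tau)

lemma keys_Sinv_single: "Poly_Mapping.keys (Sinv S (Poly_Mapping.single (c, a) 1)) = prod.swap ` Poly_Mapping.keys (S (Poly_Mapping.single (a, c) 1))"
  by (simp add: Sinv_tau flip2_single keys_tau)

lemma T3_basis_L:
  fixes S :: "'b smap"
  shows "Poly_Mapping.lookup (S13 (Sinv S) Eplus (S23 (Sinv S) Ein (Poly_Mapping.single (b, c, a) 1))) (p, q, s) =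
    (\<Sum>x\<in>Poly_Mapping.keys (S (Poly_Mapping.single (a, c) 1)). Ein (negvar (Poly_Mapping.lookup (S (Poly_Mapping.single (a, c) 1)) x)) *
       (if q = snd x then Eplus (negvar (Poly_Mapping.lookup (S (Poly_Mapping.single (fst x, b) 1)) (s, p))) else 0))"
proof -
  let ?T = "Sinv S"
  let ?W = "?T (Poly_Mapping.single (c, a) 1)"
  have "Poly_Mapping.lookup (S13 ?T Eplus (S23 ?T Ein (Poly_Mapping.single (b, c, a) 1))) (p, q, s)
      = Poly_Mapping.lookup (lin_ext (k13 ?T Eplus) (k23 ?T Ein (b, c, a))) (p, q, s)"
    by (simp add: S13_k13 S23_k23 lin_ext_single)
  also have "\<dots> = (\<Sum>x\<in>(\<lambda>(r, s). (b, r, s)) ` Poly_Mapping.keys ?W. Poly_Mapping.lookup (k23 ?T Ein (b, c, a)) x * Poly_Mapping.lookup (k13 ?T Eplus x) (p, q, s))"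
    by (rule lookup_lin_ext_sup) (simp, rule keys_k23[of Ein], simp)
  also have "\<dots> = (\<Sum>y\<in>Poly_Mapping.keys ?W. Ein (Poly_Mapping.lookup ?W y) *
       (if q = fst y then Eplus (Poly_Mapping.lookup (?T (Poly_Mapping.single (b, snd y) 1)) (p, s)) else 0))"
    by (subst sum.reindex) (auto simp: inj_on_def lookup_k23[of Ein] lookup_k13[of Eplus] split_beta intro!: sum.cong)
  also have "\<dots> = (\<Sum>y\<in>prod.swap ` Poly_Mapping.keys (S (Poly_Mapping.single (a, c) 1)). Ein (negvar (Poly_Mapping.lookup (S (Poly_Mapping.single (a, c) 1)) (prod.swap y))) *
       (if q = fst y then Eplus (negvar (Poly_Mapping.lookup (S (Poly_Mapping.single (snd y, b) 1)) (s, p))) else 0))"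
    by (simp add: keys_Sinv_single lookup_Sinv_single cong: if_cong)
  also have "\<dots> = (\<Sum>x\<in>Poly_Mapping.keys (S (Poly_Mapping.single (a, c) 1)). Ein (negvar (Poly_Mapping.lookup (S (Poly_Mapping.single (a, c) 1)) x)) *
       (if q = snd x then Eplus (negvar (Poly_Mapping.lookup (S (Poly_Mapping.single (fst x, b) 1)) (s, p))) else 0))"
    by (subst sum.reindex) (auto simp: inj_on_def cong: if_cong)
  finally show ?thesis .
qed

lemma T3_basis_R:
  fixes S :: "'b smap"
  shows "Poly_Mapping.lookup (S12 S Eminus (S13 S Ein (Poly_Mapping.single (a, b, c) 1))) (s, p, q) =
    (\<Sum>x\<in>Poly_Mapping.keys (S (Poly_Mapping.single (a, c) 1)). Ein (Poly_Mapping.lookup (S (Poly_Mapping.single (a, c) 1)) x) *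
       (if q = snd x then Eminus (Poly_Mapping.lookup (S (Poly_Mapping.single (fst x, b) 1)) (s, p)) else 0))"
proof -
  have "Poly_Mapping.lookup (S12 S Eminus (S13 S Ein (Poly_Mapping.single (a, b, c) 1))) (s, p, q)
      = Poly_Mapping.lookup (lin_ext (k12 S Eminus) (k13 S Ein (a, b, c))) (s, p, q)"
    by (simp add: S13_k13 S12_k12 lin_ext_single)
  also have "\<dots> = (\<Sum>x\<in>(\<lambda>(p, q). (p, b, q)) ` Poly_Mapping.keys (S (Poly_Mapping.single (a, c) 1)). Poly_Mapping.lookup (k13 S Ein (a, b, c)) x * Poly_Mapping.lookup (k12 S Eminus x) (s, p, q))"
    by (rule lookup_lin_ext_sup) (simp, rule keys_k13[of Ein], simp)
  also have "\<dots> = (\<Sum>x\<in>Poly_Mapping.keys (S (Poly_Mapping.single (a, c) 1)). Ein (Poly_Mapping.lookup (S (Poly_Mapping.single (a, c) 1)) x) *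
       (if q = snd x then Eminus (Poly_Mapping.lookup (S (Poly_Mapping.single (fst x, b) 1)) (s, p)) else 0))"
    by (subst sum.reindex) (auto simp: inj_on_def lookup_k13[of Ein] lookup_k12[of Eminus] split_beta intro!: sum.cong)
  finally show ?thesis .
qed

lemma T3id:
  fixes S :: "'b smap"
  shows "negin (S13 (Sinv S) Eplus (S23 (Sinv S) Ein (negin (rot3 X)))) = rot3 (S12 S Eminus (S13 S Ein X))"
proof -
  let ?F = "\<lambda>X. negin (S13 (Sinv S) Eplus (S23 (Sinv S) Ein (negin (rot3 X))))"
  let ?G = "\<lambda>X. rot3 (S12 S Eminus (S13 S Ein X))"
  have F: "?F X = lin_ext (\<lambda>i. ?F (Poly_Mapping.single i 1)) X"
    by (rule lin_ext_unique) (simp_all add: rot3_add negin_add S13_k13 S23_k23 lin_ext_add rot3_smul negin_smul lin_ext_smul)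
  have G: "?G X = lin_ext (\<lambda>i. ?G (Poly_Mapping.single i 1)) X"
    by (rule lin_ext_unique) (simp_all add: rot3_add S13_k13 S12_k12 lin_ext_add rot3_smul lin_ext_smul)
  have base: "?F (Poly_Mapping.single i 1) = ?G (Poly_Mapping.single i 1)" for i
  proof -
    obtain a b c where i: "i = (a, b, c)" by (cases i) auto
    show ?thesis
    proof (rule poly_mapping_eqI)
      fix j :: "'b \<times> 'b \<times> 'b"
      obtain p q s where j: "j = (p, q, s)" by (cases j) auto
      have "Poly_Mapping.lookup (?F (Poly_Mapping.single i 1)) j = nin (Poly_Mapping.lookup (S13 (Sinv S) Eplus (S23 (Sinv S) Ein (Poly_Mapping.single (b, c, a) 1))) (p, q, s))"
        by (simp add: i j rot3_single negin_single1)
      also have "\<dots> = Poly_Mapping.lookup (S12 S Eminus (S13 S Ein (Poly_Mapping.single (a, b, c) 1))) (s, p, q)"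
        unfolding T3_basis_L T3_basis_R nin_sum
        by (rule sum.cong) (simp_all add: nin_mult nin_Ein nin_Eplus)
      also have "\<dots> = Poly_Mapping.lookup (?G (Poly_Mapping.single i 1)) j"
        by (simp add: i j)
      finally show "Poly_Mapping.lookup (?F (Poly_Mapping.single i 1)) j = Poly_Mapping.lookup (?G (Poly_Mapping.single i 1)) j" .
    qed
  qed
  show ?thesis using F G base by simp
qed

subsection \<open>Assembling (c)\<close>

lemma KK_ST: "unitary S \<Longrightarrow> Sext S (Sinv S (Poly_Mapping.single p 1)) = emb2 (Poly_Mapping.single p 1)"
  by (simp add: unitary_def)

lemma KK_TS:
  assumes "unitary S"
  shows "Sext (Sinv S) (S (Poly_Mapping.single p 1)) = emb2 (Poly_Mapping.single p 1)"
proof -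
  have "Sext S (emb2 (Poly_Mapping.single p 1)) = S (Poly_Mapping.single p 1)"
    by (simp add: Sext_def emb2_single lin_ext_single)
  then show ?thesis using unitary_right[OF assms, of "emb2 (Poly_Mapping.single p 1)"] by simp
qed

lemma c2:
  assumes un: "unitary S"
  shows "(\<forall>H n. Sext S (Yf E H n) = Yf E (S23 S Ein (S13 S Eplus H)) n)
     \<longleftrightarrow> (\<forall>G n. Sext (Sinv S) (Yf E G n) = Yf E (S13 (Sinv S) Eplus (S23 (Sinv S) Ein G)) n)"
proof
  assume A: "\<forall>H n. Sext S (Yf E H n) = Yf E (S23 S Ein (S13 S Eplus H)) n"
  show "\<forall>G n. Sext (Sinv S) (Yf E G n) = Yf E (S13 (Sinv S) Eplus (S23 (Sinv S) Ein G)) n"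
  proof (intro allI)
    fix G n
    define H where "H = S13 (Sinv S) Eplus (S23 (Sinv S) Ein G)"
    have "S23 S Ein (S13 S Eplus H) = G"
      unfolding H_def
      by (simp add: inv13[OF rhom_Eplus KK_ST[OF un]] inv23[OF rhom_Ein KK_ST[OF un]])
    then have "Sext S (Yf E H n) = Yf E G n" using A by metis
    then have "Sext (Sinv S) (Sext S (Yf E H n)) = Sext (Sinv S) (Yf E G n)" by simp
    then show "Sext (Sinv S) (Yf E G n) = Yf E (S13 (Sinv S) Eplus (S23 (Sinv S) Ein G)) n"
      by (simp add: unitary_right[OF un] H_def)
  qed
next
  assume A: "\<forall>G n. Sext (Sinv S) (Yf E G n) = Yf E (S13 (Sinv S) Eplus (S23 (Sinv S) Ein G)) n"
  show "\<forall>H n. Sext S (Yf E H n) = Yf E (S23 S Ein (S13 S Eplus H)) n"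
  proof (intro allI)
    fix H n
    define G where "G = S23 S Ein (S13 S Eplus H)"
    have "S13 (Sinv S) Eplus (S23 (Sinv S) Ein G) = H"
      unfolding G_def
      by (simp add: inv13[OF rhom_Eplus KK_TS[OF un]] inv23[OF rhom_Ein KK_TS[OF un]])
    then have "Sext (Sinv S) (Yf E G n) = Yf E H n" using A by metis
    then have "Sext S (Sext (Sinv S) (Yf E G n)) = Sext S (Yf E H n)" by simp
    then show "Sext S (Yf E H n) = Yf E (S23 S Ein (S13 S Eplus H)) n"
      by (simp add: unitary_left[OF un] G_def)
  qed
qed

lemma flip2_inj: "flip2 u = flip2 v \<Longrightarrow> u = v"
  by (metis flip2_flip2)

lemma c3_pointwise:
  fixes Y :: "'b vop" and S :: "'b smap"
  assumes Y: "nonlocal_va Y vac"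
  shows "(Sext S (Yf (ER Y) H n) = Yf (ER Y) (S12 S Eminus (S13 S Ein H)) n)
     \<longleftrightarrow> (Sext (Sinv S) (Yf (EL Y) (negin (rot3 H)) n) = Yf (EL Y) (S13 (Sinv S) Eplus (S23 (Sinv S) Ein (negin (rot3 H)))) n)"
proof -
  let ?T = "Sinv S"
  let ?G = "negin (rot3 H)"
  have L: "Sext S (Yf (ER Y) H n) = flip2 (Poly_Mapping.map negvar (Sext ?T (Yf (EL Y) ?G n)))"
    by (simp add: YR_YL[OF Y] Sext_flip2 mapneg_Yf[OF Y])
  have R: "Yf (ER Y) (S12 S Eminus (S13 S Ein H)) n = flip2 (Poly_Mapping.map negvar (Yf (EL Y) (S13 ?T Eplus (S23 ?T Ein ?G)) n))"
    by (simp add: YR_YL[OF Y] mapneg_Yf[OF Y] T3id[symmetric])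
  show ?thesis unfolding L R
    by (metis flip2_inj mapneg_mapneg)
qed

lemma c3:
  fixes Y :: "'b vop" and S :: "'b smap"
  assumes Y: "nonlocal_va Y vac"
  shows "(\<forall>G n. Sext (Sinv S) (Yf (EL Y) G n) = Yf (EL Y) (S13 (Sinv S) Eplus (S23 (Sinv S) Ein G)) n)
     \<longleftrightarrow> (\<forall>H n. Sext S (Yf (ER Y) H n) = Yf (ER Y) (S12 S Eminus (S13 S Ein H)) n)"
proof
  assume A: "\<forall>G n. Sext (Sinv S) (Yf (EL Y) G n) = Yf (EL Y) (S13 (Sinv S) Eplus (S23 (Sinv S) Ein G)) n"
  show "\<forall>H n. Sext S (Yf (ER Y) H n) = Yf (ER Y) (S12 S Eminus (S13 S Ein H)) n"
    using A c3_pointwise[OF Y] by blast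
next
  assume B: "\<forall>H n. Sext S (Yf (ER Y) H n) = Yf (ER Y) (S12 S Eminus (S13 S Ein H)) n"
  show "\<forall>G n. Sext (Sinv S) (Yf (EL Y) G n) = Yf (EL Y) (S13 (Sinv S) Eplus (S23 (Sinv S) Ein G)) n"
  proof (intro allI)
    fix G :: "'b t3" and n :: int
    have "negin (rot3 (rot3 (rot3 (negin G)))) = G" by simp
    then show "Sext (Sinv S) (Yf (EL Y) G n) = Yf (EL Y) (S13 (Sinv S) Eplus (S23 (Sinv S) Ein G)) n"
      using B c3_pointwise[OF Y, of S "rot3 (rot3 (negin G))" n] by metis
  qed
qed

theorem lemma3p6:
  fixes Y :: "'b vop" and vac :: "'b \<Rightarrow>\<^sub>0 complex" and S :: "'b smap"
  assumes "nonlocal_va Y vac"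
    and "smap_linear S"
    and "qybe S"
    and "unitary S"
  shows "((\<forall>v. S (tens2 vac v) = emb2 (tens2 vac v)) \<longleftrightarrow> (\<forall>v. S (tens2 v vac) = emb2 (tens2 v vac)))
       \<and> ((\<forall>t. tensL fls_const (vD Y vac) (S t) - S (tensL (\<lambda>c. c) (vD Y vac) t) = - ddx (S t))
           \<longleftrightarrow> (\<forall>t. tensR fls_const (vD Y vac) (Sinv S t) - Sinv S (tensR (\<lambda>c. c) (vD Y vac) t)
                   = ddx (Sinv S t)))
       \<and> ((\<forall>t. S_YL S Y t = YL_app Y (S23 S Ein (S13 S Eplus (emb3 t))))
           \<longleftrightarrow> (\<forall>t. S_YR S Y t = YR_app Y (S12 S Eminus (S13 S Ein (emb3 t)))))"
proof (intro conjI)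
  show "(\<forall>v. S (tens2 vac v) = emb2 (tens2 vac v)) \<longleftrightarrow> (\<forall>v. S (tens2 v vac) = emb2 (tens2 v vac))"
    by (rule part_a[OF assms(2) assms(4)])
  show "(\<forall>t. tensL fls_const (vD Y vac) (S t) - S (tensL (\<lambda>c. c) (vD Y vac) t) = - ddx (S t))
           \<longleftrightarrow> (\<forall>t. tensR fls_const (vD Y vac) (Sinv S t) - Sinv S (tensR (\<lambda>c. c) (vD Y vac) t)
                   = ddx (Sinv S t))"
    by (rule part_b)
  show "(\<forall>t. S_YL S Y t = YL_app Y (S23 S Ein (S13 S Eplus (emb3 t))))
           \<longleftrightarrow> (\<forall>t. S_YR S Y t = YR_app Y (S12 S Eminus (S13 S Ein (emb3 t))))"
    by (simp only: A_iff[OF assms(1) assms(2)] c2[OF assms(4)] c3[OF assms(1)] B_iff[OF assms(1) assms(2)])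
qed


end
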